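(* Let $q\in U(1)$, and let $A(DT^2_q)$, $A(Z_2)=\mathrm{span}\{z,1-z\}$, $A(T^2)=\mathbb{C}[u^{\pm1},v^{\pm1}]$ be as defined below. Let $\sigma:A(T^2)\otimes A(T^2)\to A(Z_2)$ be the linear map $\sigma=(\varepsilon\otimes\varepsilon)z+\sigma_q(1-z)$ with $\sigma_q(u^kv^l\otimes u^mv^n)$ given by $q^{-2kn}$ ($k>l,m>n$); $q^{-m(2k+m)}$ ($k>l,m=n$); $q^{-2n(k+m)}$ ($k>l,m<n,k+m>l+n$); $q^{(k+m)(2l-k-m)}$ ($k>l,m<n,k+m=l+n$); $q^{2l(k+m)}$ ($k>l,m<n,k+m<l+n$); $q^{-k(k+2n)}$ ($k=l,m>n$); $1$ ($k=l,m=n$); $q^{k(k+2m)}$ ($k=l,m<n$); $q^{-2k(l+n)}$ ($k<l,m>n,k+m>l+n$); $q^{(l+n)(l+n-2k)}$ ($k<l,m>n,k+m=l+n$); $q^{2m(l+n)}$ ($k<l,m>n,k+m<l+n$); $q^{m(m+2l)}$ ($k<l,m=n$); $q^{2lm}$ ($k<l,m<n$). Let $\lambda:A(T^2)\to A(T^2)\otimes A(Z_2)$ be the $*$-algebra homomorphism $\lambda(u^mv^n)=u^mv^n\otimes z+u^nv^m\otimes(1-z)$, written $\lambda(h)=h^{(0)}\otimes h^{(1)}$. Let $A(Z_2)^{\lambda}\#_\sigma A(T^2)$ denote the vector space $A(Z_2)\otimes A(T^2)$ with multiplication $(x\otimes h)(y\otimes g)=xy\,\sigma(h_{(1)}\otimes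 g_{(1)})\otimes h_{(2)}g_{(2)}$ and comultiplication $\Delta(x\otimes h)=(x_{(1)}\otimes h_{(1)}{}^{(0)})\otimes(x_{(2)}h_{(1)}{}^{(1)}\otimes h_{(2)})$ (Sweedler notation). Then $A(DT^2_q)$ is isomorphic as a Hopf algebra to the bicross-product $A(Z_2)^{\lambda}\#_\sigma A(T^2)$.
   Context: Let $q\in U(1)$. $A(U_{q^{-1},q}(2))$ is the complex $*$-Hopf algebra generated by $a,b,c,d,D^{-1}$, where $D:=ad-q^{-1}bc$, with relations $ab=q^{-1}ba$, $cd=q^{-1}dc$, $ac=qca$, $bd=qdb$, $ad=da$, $bc=q^2cb$, $DD^{-1}=D^{-1}D=1$; coproduct $\Delta(a)=a\otimes a+b\otimes c$, $\Delta(b)=a\otimes b+b\otimes d$, $\Delta(c)=c\otimes a+d\otimes c$, $\Delta(d)=c\otimes b+d\otimes d$; counit $\varepsilon(a)=\varepsilon(d)=1$, $\varepsilon(b)=\varepsilon(c)=0$; involution $a^*=S(a)$, $b^*=S(c)$, $c^*=S(b)$, $d^*=S(d)$ with $S$ the antipode. $A(DT^2_q)$ is the quotient of $A(U_{q^{-1},q}(2))$ by the Hopf ideal generated by $ab,ac,cd,bd$; images keep their names, and $z:=D^{-1}ad$ is a central idempotent. $A(Z_2)$ is the Hopf algebra of functions on $Z_2=\{0,1\}$, identified with $\mathrm{span}\{z,1-z\}\subset A(DT^2_q)$ via $f\mapsto z$ where $f(0)=1,f(1)=0$ (so $z$ and $1-z$ are the delta functions at $0$ and $1$). $A(T^2)=\mathbb{C}[u^{\pm1},v^{\pm1}]$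 is the Hopf algebra of polynomial functions on the 2-torus with $u,v$ group-like unitaries; $\varepsilon$ denotes its counit. *)

theory Defs
  imports Complex_Main "HOL-Library.Poly_Mapping"
begin

text \<open>The free complex algebra on generators of type 'g: finitely supported
  complex functions on words.\<close>
type_synonym 'g free_alg = "'g list \<Rightarrow>\<^sub>0 complex"
type_synonym 'g free_alg2 = "('g list \<times> 'g list) \<Rightarrow>\<^sub>0 complex"

definition fmul :: "'g free_alg \<Rightarrow> 'g free_alg \<Rightarrow> 'g free_alg" where
  "fmul p r = (\<Sum>v\<in>Poly_Mapping.keys p. \<Sum>w\<in>Poly_Mapping.keys r.
      Poly_Mapping.single (v @ w) (Poly_Mapping.lookup p v * Poly_Mapping.lookup r w))"

definition fscal :: "complex \<Rightarrow> 'g free_alg" where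
  "fscal c = Poly_Mapping.single [] c"

definition fgen :: "'g \<Rightarrow> 'g free_alg" where
  "fgen g = Poly_Mapping.single [g] 1"

inductive_set gen_ideal :: "'g free_alg set \<Rightarrow> 'g free_alg set" for R where
  gen: "r \<in> R \<Longrightarrow> r \<in> gen_ideal R"
| zero: "0 \<in> gen_ideal R"
| add: "a \<in> gen_ideal R \<Longrightarrow> b \<in> gen_ideal R \<Longrightarrow> a + b \<in> gen_ideal R"
| lmul: "a \<in> gen_ideal R \<Longrightarrow> fmul x a \<in> gen_ideal R"
| rmul: "a \<in> gen_ideal R \<Longrightarrow> fmul a x \<in> gen_ideal R"

definition ftensor :: "'g free_alg \<Rightarrow> 'g free_alg \<Rightarrow> 'g free_alg2" where
  "ftensor p r = (\<Sum>v\<in>Poly_Mapping.keys p. \<Sum>w\<in>Poly_Mapping.keys r.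
      Poly_Mapping.single (v, w) (Poly_Mapping.lookup p v * Poly_Mapping.lookup r w))"

definition fmul2 :: "'g free_alg2 \<Rightarrow> 'g free_alg2 \<Rightarrow> 'g free_alg2" where
  "fmul2 s t = (\<Sum>x\<in>Poly_Mapping.keys s. \<Sum>y\<in>Poly_Mapping.keys t.
      Poly_Mapping.single (fst x @ fst y, snd x @ snd y) (Poly_Mapping.lookup s x * Poly_Mapping.lookup t y))"

text \<open>The subspace I \<otimes> F + F \<otimes> I of F \<otimes> F (kernel of F\<otimes>F \<rightarrow> F/I \<otimes> F/I).\<close>
inductive_set tens_ker :: "'g free_alg set \<Rightarrow> 'g free_alg2 set" for I where
  zero: "0 \<in> tens_ker I"
| left: "p \<in> I \<Longrightarrow> ftensor p w \<in> tens_ker I"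
| right: "p \<in> I \<Longrightarrow> ftensor w p \<in> tens_ker I"
| add: "a \<in> tens_ker I \<Longrightarrow> b \<in> tens_ker I \<Longrightarrow> a + b \<in> tens_ker I"

fun delta_word :: "('g \<Rightarrow> 'g free_alg2) \<Rightarrow> 'g list \<Rightarrow> 'g free_alg2" where
  "delta_word dg [] = Poly_Mapping.single ([], []) 1"
| "delta_word dg (g # w) = fmul2 (dg g) (delta_word dg w)"

definition fdelta :: "('g \<Rightarrow> 'g free_alg2) \<Rightarrow> 'g free_alg \<Rightarrow> 'g free_alg2" where
  "fdelta dg p = (\<Sum>w\<in>Poly_Mapping.keys p. fmul2 (Poly_Mapping.single ([], []) (Poly_Mapping.lookup p w)) (delta_word dg w))"

definition fcounit :: "('g \<Rightarrow> complex) \<Rightarrow> 'g free_alg \<Rightarrow> complex" where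
  "fcounit eg p = (\<Sum>w\<in>Poly_Mapping.keys p. Poly_Mapping.lookup p w * (\<Prod>i<length w. eg (w ! i)))"

section \<open>The Hopf algebra A(DT^2_q) by generators and relations\<close>

datatype gen = Ga | Gb | Gc | Gd | GDi  \<comment> \<open>a, b, c, d, D^{-1}\<close>

definition gA :: "gen free_alg" where "gA = fgen Ga"
definition gB :: "gen free_alg" where "gB = fgen Gb"
definition gC :: "gen free_alg" where "gC = fgen Gc"
definition gD :: "gen free_alg" where "gD = fgen Gd"
definition gDi :: "gen free_alg" where "gDi = fgen GDi"

definition detq :: "complex \<Rightarrow> gen free_alg" where
  "detq q = fmul gA gD - fmul (fscal (inverse q)) (fmul gB gC)"

text \<open>Defining relations of A(U_{q^{-1},q}(2)) (as elements r meaning r = 0).\<close>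
definition rels_U :: "complex \<Rightarrow> gen free_alg set" where
  "rels_U q = {
     fmul gA gB - fmul (fscal (inverse q)) (fmul gB gA),
     fmul gC gD - fmul (fscal (inverse q)) (fmul gD gC),
     fmul gA gC - fmul (fscal q) (fmul gC gA),
     fmul gB gD - fmul (fscal q) (fmul gD gB),
     fmul gA gD - fmul gD gA,
     fmul gB gC - fmul (fscal (q^2)) (fmul gC gB),
     fmul (detq q) gDi - fscal 1,
     fmul gDi (detq q) - fscal 1 }"

definition rels_DT :: "complex \<Rightarrow> gen free_alg set" where
  "rels_DT q = rels_U q \<union> {fmul gA gB, fmul gA gC, fmul gC gD, fmul gB gD}"

definition ideal_DT :: "complex \<Rightarrow> gen free_alg set" where
  "ideal_DT q = gen_ideal (rels_DT q)"

text \<open>Coproduct and counit on generators (D is group-like, so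
  Delta(D^{-1}) = D^{-1} \<otimes> D^{-1}, eps(D^{-1}) = 1).\<close>
fun delta_gen :: "gen \<Rightarrow> gen free_alg2" where
  "delta_gen Ga = ftensor gA gA + ftensor gB gC"
| "delta_gen Gb = ftensor gA gB + ftensor gB gD"
| "delta_gen Gc = ftensor gC gA + ftensor gD gC"
| "delta_gen Gd = ftensor gC gB + ftensor gD gD"
| "delta_gen GDi = ftensor gDi gDi"

fun eps_gen :: "gen \<Rightarrow> complex" where
  "eps_gen Ga = 1" | "eps_gen Gb = 0" | "eps_gen Gc = 0" | "eps_gen Gd = 1"
| "eps_gen GDi = 1"

section \<open>The bicrossproduct A(Z_2) {}^\<lambda>#_\<sigma> A(T^2)\<close>

text \<open>Z_2 = {0,1}; Z0, Z1 stand for 0, 1. A(Z_2) has basis of delta functions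
  delta_Z0 = z, delta_Z1 = 1 - z; A(T^2) has basis u^k v^l, indexed by (k,l).
  Hence A(Z_2) \<otimes> A(T^2) is the free vector space on z2 \<times> int \<times> int.\<close>
datatype z2 = Z0 | Z1

fun z2_add :: "z2 \<Rightarrow> z2 \<Rightarrow> z2" where
  "z2_add Z0 x = x" | "z2_add Z1 Z0 = Z1" | "z2_add Z1 Z1 = Z0"

type_synonym bcp = "(z2 \<times> int \<times> int) \<Rightarrow>\<^sub>0 complex"
type_synonym bcp2 = "((z2 \<times> int \<times> int) \<times> (z2 \<times> int \<times> int)) \<Rightarrow>\<^sub>0 complex"

definition sigma_q :: "complex \<Rightarrow> int \<Rightarrow> int \<Rightarrow> int \<Rightarrow> int \<Rightarrow> complex" where
  "sigma_q q k l m n =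
    (if k > l then
       (if m > n then q powi (-2*k*n)
        else if m = n then q powi (-m*(2*k+m))
        else if k + m > l + n then q powi (-2*n*(k+m))
        else if k + m = l + n then q powi ((k+m)*(2*l-k-m))
        else q powi (2*l*(k+m)))
     else if k = l then
       (if m > n then q powi (-k*(k+2*n))
        else if m = n then 1
        else q powi (k*(k+2*m)))
     else
       (if m > n then
          (if k + m > l + n then q powi (-2*k*(l+n))
           else if k + m = l + n then q powi ((l+n)*(l+n-2*k))
           else q powi (2*m*(l+n)))
        else if m = n then q powi (m*(m+2*l))
        else q powi (2*l*m)))"

text \<open>sigma = (eps \<otimes> eps) z + sigma_q (1 - z) on basis elements, as a function
  on Z_2 (element of A(Z_2)); eps(u^k v^l) = 1.\<close>
definition sigma :: "complex \<Rightarrow> int \<times> int \<Rightarrow> int \<times> int \<Rightarrow> z2 \<Rightarrow> complex" where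
  "sigma q h g e = (case (h, g) of ((k, l), (m, n)) \<Rightarrow>
     (if e = Z0 then 1 * 1 else sigma_q q k l m n))"

definition zdelta :: "z2 \<Rightarrow> z2 \<Rightarrow> complex" where
  "zdelta i e = (if e = i then 1 else 0)"

text \<open>lambda(u^m v^n) = u^m v^n \<otimes> z + u^n v^m \<otimes> (1 - z) = \<Sum>_e lam e (m,n) \<otimes> delta_e\<close>
fun lam :: "z2 \<Rightarrow> int \<times> int \<Rightarrow> int \<times> int" where
  "lam Z0 (m, n) = (m, n)" | "lam Z1 (m, n) = (n, m)"

text \<open>Multiplication (x \<otimes> h)(y \<otimes> g) = x y sigma(h_(1) \<otimes> g_(1)) \<otimes> h_(2) g_(2),
  extended bilinearly from basis elements delta_i \<otimes> u^k v^l (group-like, so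
  h_(1) \<otimes> h_(2) = h \<otimes> h); the A(Z_2)-factor is expanded in the delta basis.\<close>
definition bcp_mul :: "complex \<Rightarrow> bcp \<Rightarrow> bcp \<Rightarrow> bcp" where
  "bcp_mul q x y = (\<Sum>a\<in>Poly_Mapping.keys x. \<Sum>b\<in>Poly_Mapping.keys y. case (a, b) of ((i, h), (j, g)) \<Rightarrow>
     (\<Sum>e\<in>{Z0, Z1}. Poly_Mapping.single (e, (fst h + fst g, snd h + snd g))
        (Poly_Mapping.lookup x a * Poly_Mapping.lookup y b * (zdelta i e * zdelta j e * sigma q h g e))))"

text \<open>Unit 1 \<otimes> 1 = (delta_Z0 + delta_Z1) \<otimes> u^0 v^0.\<close>
definition bcp_one :: bcp where
  "bcp_one = Poly_Mapping.single (Z0, (0, 0)) 1 + Poly_Mapping.single (Z1, (0, 0)) 1"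

text \<open>Comultiplication Delta(x \<otimes> h) = (x_(1) \<otimes> h_(1)^(0)) \<otimes> (x_(2) h_(1)^(1) \<otimes> h_(2)),
  with Delta(delta_i) = \<Sum>_{i1 + i2 = i} delta_i1 \<otimes> delta_i2 and
  lambda(h) = \<Sum>_e lam e h \<otimes> delta_e.\<close>
definition bcp_delta :: "bcp \<Rightarrow> bcp2" where
  "bcp_delta x = (\<Sum>a\<in>Poly_Mapping.keys x. case a of (i, h) \<Rightarrow>
     (\<Sum>i1\<in>{Z0, Z1}. \<Sum>i2\<in>{Z0, Z1}. \<Sum>e\<in>{Z0, Z1}. \<Sum>e'\<in>{Z0, Z1}.
        if z2_add i1 i2 = i then
          Poly_Mapping.single ((i1, lam e h), (e', h))
            (Poly_Mapping.lookup x a * (zdelta i2 e' * zdelta e e'))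
        else 0))"

definition bcp_counit :: "bcp \<Rightarrow> complex" where
  "bcp_counit x = (\<Sum>a\<in>Poly_Mapping.keys x. case a of (i, h) \<Rightarrow> Poly_Mapping.lookup x a * zdelta i Z0 * 1)"

definition lin_ext :: "((z2 \<times> int \<times> int) \<Rightarrow> 'g free_alg) \<Rightarrow> bcp \<Rightarrow> 'g free_alg" where
  "lin_ext f x = (\<Sum>a\<in>Poly_Mapping.keys x. fmul (fscal (Poly_Mapping.lookup x a)) (f a))"

definition lin_ext2 :: "((z2 \<times> int \<times> int) \<Rightarrow> 'g free_alg) \<Rightarrow> bcp2 \<Rightarrow> 'g free_alg2" where
  "lin_ext2 f t = (\<Sum>a\<in>Poly_Mapping.keys t.
      fmul2 (Poly_Mapping.single ([], []) (Poly_Mapping.lookup t a)) (ftensor (f (fst a)) (f (snd a))))"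

text \<open>Hopf algebra isomorphism (bialgebra isomorphism; the antipode is then
  automatically preserved) from the bicrossproduct onto A(DT^2_q) = F/I, given by a
  linear map Phi : bicrossproduct \<rightarrow> F composed with the quotient map F \<rightarrow> F/I.\<close>
definition hopf_iso_DT :: "complex \<Rightarrow> ((z2 \<times> int \<times> int) \<Rightarrow> gen free_alg) \<Rightarrow> bool" where
  "hopf_iso_DT q f \<longleftrightarrow>
     (let I = ideal_DT q; \<Phi> = lin_ext f in
       (\<forall>p. \<exists>x. p - \<Phi> x \<in> I) \<and>
       (\<forall>x. \<Phi> x \<in> I \<longrightarrow> x = 0) \<and>
       (\<forall>x y. \<Phi> (bcp_mul q x y) - fmul (\<Phi> x) (\<Phi> y) \<in> I) \<and>
       \<Phi> bcp_one - fscal 1 \<in> I \<and>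
       (\<forall>x. fdelta delta_gen (\<Phi> x) - lin_ext2 f (bcp_delta x) \<in> tens_ker I) \<and>
       (\<forall>x. fcounit eps_gen (\<Phi> x) = bcp_counit x))"

end

theory Submission
  imports Defs "HOL-Library.Product_Plus"
begin


instantiation list :: (type) monoid_add
begin
definition zero_list_def: "(0::'a list) = []"
definition plus_list_def: "(xs::'a list) + ys = xs @ ys"
instance by standard (simp_all add: zero_list_def plus_list_def)
end

definition Lx :: "('a \<Rightarrow> 'c::zero \<Rightarrow> 'b::comm_monoid_add) \<Rightarrow> ('a \<Rightarrow>\<^sub>0 'c) \<Rightarrow> 'b" where
  "Lx g x = (\<Sum>a\<in>Poly_Mapping.keys x. g a (Poly_Mapping.lookup x a))"

lemma Lx_superset:
  assumes "finite S" "Poly_Mapping.keys x \<subseteq> S" "\<And>a. g a 0 = 0"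
  shows "Lx g x = (\<Sum>a\<in>S. g a (Poly_Mapping.lookup x a))"
  unfolding Lx_def
  by (rule sum.mono_neutral_left) (use assms in \<open>auto simp: in_keys_iff\<close>)

lemma Lx_add:
  fixes g :: "'a \<Rightarrow> 'c::monoid_add \<Rightarrow> 'b::comm_monoid_add"
  assumes "\<And>a. g a 0 = 0" "\<And>a c d. g a (c + d) = g a c + g a d"
  shows "Lx g (x + y) = Lx g x + Lx g y"
proof -
  let ?S = "Poly_Mapping.keys x \<union> Poly_Mapping.keys y"
  have f: "finite ?S" by simp
  have k: "Poly_Mapping.keys (x + y) \<subseteq> ?S"
    by (auto simp: in_keys_iff lookup_add)
  show ?thesis
    using Lx_superset[OF f k, of g] Lx_superset[OF f _, of x g] Lx_superset[OF f _, of y g] assms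
    by (simp add: lookup_add sum.distrib)
qed

lemma Lx_single:
  assumes "\<And>a. g a 0 = 0"
  shows "Lx g (Poly_Mapping.single a c) = g a c"
  using Lx_superset[of "{a}" "Poly_Mapping.single a c" g] assms
  by simp

lemma Lx_zero[simp]: "Lx g 0 = 0"
  by (simp add: Lx_def)

lemma pm_expand: "x = (\<Sum>a\<in>Poly_Mapping.keys x. Poly_Mapping.single a (Poly_Mapping.lookup x a))"
  by (rule poly_mapping_eqI) (simp add: lookup_sum lookup_single when_def in_keys_iff)

lemma pm_induct[case_names zero single add]:
  fixes x :: "'a \<Rightarrow>\<^sub>0 'b::comm_monoid_add"
  assumes "P 0" "\<And>a c. P (Poly_Mapping.single a c)" "\<And>x y. P x \<Longrightarrow> P y \<Longrightarrow> P (x + y)"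
  shows "P x"
proof -
  have "\<And>S. finite S \<Longrightarrow> P (\<Sum>a\<in>S. Poly_Mapping.single a (Poly_Mapping.lookup x a))"
  proof -
    fix S :: "'a set" assume "finite S"
    then show "P (\<Sum>a\<in>S. Poly_Mapping.single a (Poly_Mapping.lookup x a))"
      by (induction S rule: finite_induct) (use assms in auto)
  qed
  then show ?thesis by (subst pm_expand) simp
qed

section \<open>Free algebra as a ring\<close>

lemma fmul_eq: "fmul p r = p * r"
proof -
  have "p * r = (\<Sum>v\<in>Poly_Mapping.keys p. Poly_Mapping.single v (Poly_Mapping.lookup p v)) *
      (\<Sum>w\<in>Poly_Mapping.keys r. Poly_Mapping.single w (Poly_Mapping.lookup r w))"
    by (metis pm_expand)
  also have "\<dots> = fmul p r"
    by (simp add: fmul_def sum_distrib_left sum_distrib_right mult_single plus_list_def)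
       (rule sum.swap)
  finally show ?thesis by simp
qed

lemma fmul2_eq: "fmul2 p r = p * r"
proof -
  have "p * r = (\<Sum>v\<in>Poly_Mapping.keys p. Poly_Mapping.single v (Poly_Mapping.lookup p v)) *
      (\<Sum>w\<in>Poly_Mapping.keys r. Poly_Mapping.single w (Poly_Mapping.lookup r w))"
    by (metis pm_expand)
  also have "\<dots> = fmul2 p r"
    by (simp add: fmul2_def sum_distrib_left sum_distrib_right mult_single plus_list_def plus_prod_def)
       (rule sum.swap)
  finally show ?thesis by simp
qed


lemma Lx_plus_fun: "Lx (\<lambda>a c. g a c + h a c) x = Lx g x + Lx h x"
  by (simp add: Lx_def sum.distrib)

lemma Lx_cong_fun: "(\<And>a c. g a c = h a c) \<Longrightarrow> Lx g x = Lx h x"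
  by (simp add: Lx_def)

lemma single0_comm:
  fixes x :: "'a::monoid_add \<Rightarrow>\<^sub>0 'b::comm_semiring_1"
  shows "Poly_Mapping.single 0 c * x = x * Poly_Mapping.single 0 c"
proof (induction x rule: pm_induct)
  case (single a d) then show ?case by (simp add: mult_single mult.commute)
qed (simp_all add: distrib_left distrib_right)

lemma single0_mult: "Poly_Mapping.single (0::'a::monoid_add) (c::'b::semiring_0) * Poly_Mapping.single 0 d
   = Poly_Mapping.single 0 (c * d)"
  by (simp add: mult_single)

lemma fscal_eq: "fscal c = Poly_Mapping.single 0 c"
  by (simp add: fscal_def zero_list_def)

lemma fgen_mult_single: "fgen g * Poly_Mapping.single w c = Poly_Mapping.single (g # w) c"
  by (simp add: fgen_def mult_single plus_list_def)

lemma ftensor_Lx: "ftensor p r = Lx (\<lambda>v a. Lx (\<lambda>w b. Poly_Mapping.single (v, w) (a * b)) r) p"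
  by (simp add: ftensor_def Lx_def)

lemma ftensor_add1: "ftensor (x + y) r = ftensor x r + ftensor y r"
  unfolding ftensor_Lx
  by (rule Lx_add) (simp_all add: Lx_def distrib_right single_add sum.distrib)

lemma ftensor_add2: "ftensor p (x + y) = ftensor p x + ftensor p y"
proof -
  have h: "\<And>v a. Lx (\<lambda>w b. Poly_Mapping.single (v, w) (a * b)) (x + y) =
     Lx (\<lambda>w b. Poly_Mapping.single (v, w) (a * b)) x + Lx (\<lambda>w b. Poly_Mapping.single (v, w) (a * b)) y"
    by (rule Lx_add) (simp_all add: distrib_left single_add)
  show ?thesis unfolding ftensor_Lx by (simp only: h Lx_plus_fun)
qed

lemma ftensor_single: "ftensor (Poly_Mapping.single v a) (Poly_Mapping.single w b) = Poly_Mapping.single (v, w) (a * b)"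
  unfolding ftensor_Lx by (simp add: Lx_single)

lemma ftensor_zero1[simp]: "ftensor 0 r = 0"
  by (simp add: ftensor_def)
lemma ftensor_zero2[simp]: "ftensor p 0 = 0"
  by (simp add: ftensor_def)

lemma ftensor_uminus1: "ftensor (- x) r = - ftensor x r"
proof -
  have "ftensor x r + ftensor (- x) r = 0" using ftensor_add1[of x "-x" r] by simp
  then show ?thesis by (metis add.commute neg_eq_iff_add_eq_0)
qed
lemma ftensor_uminus2: "ftensor r (- x) = - ftensor r x"
proof -
  have "ftensor r x + ftensor r (- x) = 0" using ftensor_add2[of r x "-x"] by simp
  then show ?thesis by (metis add.commute neg_eq_iff_add_eq_0)
qed
lemma ftensor_diff1: "ftensor (x - y) r = ftensor x r - ftensor y r"
  by (simp only: diff_conv_add_uminus ftensor_add1 ftensor_uminus1)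
lemma ftensor_diff2: "ftensor r (x - y) = ftensor r x - ftensor r y"
  by (simp only: diff_conv_add_uminus ftensor_add2 ftensor_uminus2)

lemma ftensor_mult:
  "ftensor x y * ftensor x' y' = ftensor (x * x') (y * y')"
proof (induction x rule: pm_induct)
  case (single v a)
  show ?case
  proof (induction y rule: pm_induct)
    case (single w b)
    show ?case
    proof (induction x' rule: pm_induct)
      case (single v' a')
      show ?case
      proof (induction y' rule: pm_induct)
        case (single w' b')
        show ?case by (simp add: ftensor_single mult_single plus_prod_def mult_ac)
      qed (simp_all add: ftensor_add2 distrib_left)
    qed (simp_all add: ftensor_add1 distrib_left distrib_right)
  qed (simp_all add: ftensor_add2 distrib_left distrib_right)
qed (simp_all add: ftensor_add1 distrib_left distrib_right)

lemma ftensor_single0: "ftensor (Poly_Mapping.single 0 a) (Poly_Mapping.single 0 b) = Poly_Mapping.single 0 (a * b)"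
proof -
  have "ftensor (Poly_Mapping.single 0 a) (Poly_Mapping.single 0 b) = Poly_Mapping.single (0, 0) (a * b)"
    by (rule ftensor_single)
  then show ?thesis by (simp only: zero_prod_def[symmetric])
qed

lemma ftensor_one: "ftensor 1 1 = 1"
  using ftensor_single0[of 1 1] by simp

lemma ftensor_scal1: "ftensor (Poly_Mapping.single 0 c * x) y = Poly_Mapping.single 0 c * ftensor x y"
proof -
  have "ftensor (Poly_Mapping.single 0 c * x) y = ftensor (Poly_Mapping.single 0 c * x) (1 * y)" by simp
  also have "\<dots> = ftensor (Poly_Mapping.single 0 c) 1 * ftensor x y" by (rule ftensor_mult[symmetric])
  also have "ftensor (Poly_Mapping.single 0 c) 1 = Poly_Mapping.single 0 c" using ftensor_single0[of c 1] by simp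
  finally show ?thesis .
qed

lemma ftensor_scal2: "ftensor x (Poly_Mapping.single 0 c * y) = Poly_Mapping.single 0 c * ftensor x y"
proof -
  have "ftensor x (Poly_Mapping.single 0 c * y) = ftensor (1 * x) (Poly_Mapping.single 0 c * y)" by simp
  also have "\<dots> = ftensor 1 (Poly_Mapping.single 0 c) * ftensor x y" by (rule ftensor_mult[symmetric])
  also have "ftensor 1 (Poly_Mapping.single 0 c) = Poly_Mapping.single 0 c" using ftensor_single0[of 1 c] by simp
  finally show ?thesis .
qed

lemma fdelta_Lx: "fdelta dg p = Lx (\<lambda>w c. Poly_Mapping.single 0 c * delta_word dg w) p"
  by (simp add: fdelta_def Lx_def fmul2_eq zero_list_def zero_prod_def)

lemma fdelta_add: "fdelta dg (x + y) = fdelta dg x + fdelta dg y"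
  unfolding fdelta_Lx by (rule Lx_add) (simp_all add: single_add distrib_right)

lemma fdelta_single: "fdelta dg (Poly_Mapping.single w c) = Poly_Mapping.single 0 c * delta_word dg w"
  unfolding fdelta_Lx by (simp add: Lx_single)

lemma fdelta_zero[simp]: "fdelta dg 0 = 0"
  by (simp add: fdelta_def)

lemma delta_word_nil: "delta_word dg [] = 1"
proof -
  have "delta_word dg [] = Poly_Mapping.single (0, 0) 1" by (simp add: zero_list_def)
  then show ?thesis by (simp add: zero_prod_def[symmetric])
qed

declare delta_word.simps(1)[simp del] delta_word_nil[simp]

lemma delta_word_append: "delta_word dg (v @ w) = delta_word dg v * delta_word dg w"
  by (induction v) (simp_all add: delta_word_nil fmul2_eq mult.assoc del: delta_word.simps(1))

lemma fdelta_mult: "fdelta dg (x * y) = fdelta dg x * fdelta dg y"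
proof (induction x rule: pm_induct)
  case (single v a)
  show ?case
  proof (induction y rule: pm_induct)
    case (single w b)
    have "fdelta dg (Poly_Mapping.single v a * Poly_Mapping.single w b)
       = Poly_Mapping.single 0 a * Poly_Mapping.single 0 b * (delta_word dg v * delta_word dg w)"
      by (simp add: mult_single fdelta_single plus_list_def delta_word_append single0_mult)
    also have "\<dots> = Poly_Mapping.single 0 a * (Poly_Mapping.single 0 b * delta_word dg v) * delta_word dg w"
      by (simp add: mult.assoc)
    also have "Poly_Mapping.single 0 b * delta_word dg v = delta_word dg v * Poly_Mapping.single 0 b"
      by (rule single0_comm)
    also have "Poly_Mapping.single 0 a * (delta_word dg v * Poly_Mapping.single 0 b) * delta_word dg w
       = (Poly_Mapping.single 0 a * delta_word dg v) * (Poly_Mapping.single 0 b * delta_word dg w)"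
      by (simp add: mult.assoc)
    finally show ?case by (simp add: fdelta_single)
  qed (simp_all add: fdelta_add distrib_left)
qed (simp_all add: fdelta_add distrib_right)

lemma fdelta_one: "fdelta dg 1 = 1"
  by (metis fdelta_single delta_word_nil mult_1 single_one zero_list_def mult.right_neutral)

lemma fdelta_fgen: "fdelta dg (fgen g) = dg g"
  by (simp add: fgen_def fdelta_single delta_word_nil fmul2_eq)

lemma fdelta_scal: "fdelta dg (Poly_Mapping.single 0 c * x) = Poly_Mapping.single 0 c * fdelta dg x"
  by (simp add: fdelta_mult fdelta_single delta_word_nil zero_list_def)

lemma fdelta_uminus: "fdelta dg (- x) = - fdelta dg x"
proof -
  have "fdelta dg x + fdelta dg (- x) = 0" using fdelta_add[of dg x "-x"] by simp
  then show ?thesis by (metis add.commute neg_eq_iff_add_eq_0)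
qed
lemma fdelta_diff: "fdelta dg (x - y) = fdelta dg x - fdelta dg y"
  by (simp only: diff_conv_add_uminus fdelta_add fdelta_uminus)

lemma prod_nth_eq: "(\<Prod>i<length w. eg (w ! i)) = prod_list (map eg w)"
  by (induction w) (simp_all add: prod.lessThan_Suc_shift del: prod.lessThan_Suc)

lemma fcounit_Lx: "fcounit eg p = Lx (\<lambda>w c. c * prod_list (map eg w)) p"
  by (simp add: fcounit_def Lx_def prod_nth_eq)

lemma fcounit_add: "fcounit eg (x + y) = fcounit eg x + fcounit eg y"
  unfolding fcounit_Lx by (rule Lx_add) (simp_all add: distrib_right)

lemma fcounit_single: "fcounit eg (Poly_Mapping.single w c) = c * prod_list (map eg w)"
  unfolding fcounit_Lx by (simp add: Lx_single)

lemma fcounit_zero[simp]: "fcounit eg 0 = 0"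
  by (simp add: fcounit_def)

lemma fcounit_mult: "fcounit eg (x * y) = fcounit eg x * fcounit eg y"
proof (induction x rule: pm_induct)
  case (single v a)
  show ?case
  proof (induction y rule: pm_induct)
    case (single w b)
    show ?case by (simp add: mult_single fcounit_single plus_list_def)
  qed (simp_all add: fcounit_add distrib_left)
qed (simp_all add: fcounit_add distrib_right)

lemma fcounit_fgen: "fcounit eg (fgen g) = eg g"
  by (simp add: fgen_def fcounit_single)

lemma fcounit_scal: "fcounit eg (Poly_Mapping.single 0 c) = c"
  by (simp add: fcounit_single zero_list_def)

lemma fcounit_one: "fcounit eg 1 = 1"
  by (metis fcounit_scal single_one)

lemma fcounit_power: "fcounit eg (x ^ n) = fcounit eg x ^ n"
  by (induction n) (simp_all add: fcounit_one fcounit_mult)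



type_synonym fa = "gen free_alg"

abbreviation sc :: "complex \<Rightarrow> fa" where "sc c \<equiv> Poly_Mapping.single 0 c"

lemma sc_mult: "sc a * sc b = sc (a * b)"
  by (simp add: mult_single)
lemma sc_mult_assoc: "sc a * (sc b * x) = sc (a * b) * x"
  by (simp add: mult.assoc[symmetric] sc_mult)
lemma sc_comm: "x * sc a = sc a * x"
  by (rule single0_comm[symmetric])
lemma sc_add: "sc (a + b) = sc a + sc b"
  by (simp add: single_add)
lemma sc_uminus: "sc (- a) = - sc a"
  by (simp add: single_uminus)
lemma sc_diff: "sc (a - b) = sc a - sc b"
  by (simp add: single_diff)
lemma sc_1: "sc 1 = 1" by simp
lemma sc_0: "sc 0 = 0" by simp
lemma sc_pull: "x * (sc a * y) = sc a * (x * y)"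
  by (simp add: mult.assoc[symmetric] sc_comm)

definition smul :: "complex \<Rightarrow> fa \<Rightarrow> fa" where "smul c x = sc c * x"

lemma smul_smul[simp]: "smul a (smul b x) = smul (a * b) x"
  by (simp add: smul_def sc_mult_assoc)
lemma smul_left[simp]: "smul a x * y = smul a (x * y)"
  by (simp add: smul_def mult.assoc)
lemma smul_right[simp]: "x * smul a y = smul a (x * y)"
  by (simp add: smul_def sc_pull)
lemma smul_1[simp]: "smul 1 x = x" by (simp add: smul_def)
lemma smul_0[simp]: "smul 0 x = 0" by (simp add: smul_def)
lemma smul_zero[simp]: "smul a 0 = 0" by (simp add: smul_def)
lemma smul_add: "smul a (x + y) = smul a x + smul a y" by (simp add: smul_def distrib_left)
lemma smul_diff: "smul a (x - y) = smul a x - smul a y" by (simp add: smul_def right_diff_distrib)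
lemma smul_uminus: "smul a (- x) = - smul a x" by (simp add: smul_def)
lemma smul_add_left: "smul (a + b) x = smul a x + smul b x" by (simp add: smul_def sc_add distrib_right)
lemma smul_uminus_left: "smul (- a) x = - smul a x" by (simp add: smul_def sc_uminus)

lemma rels_ring:
  "rels_DT q = {
     gA * gB - smul (inverse q) (gB * gA),
     gC * gD - smul (inverse q) (gD * gC),
     gA * gC - smul q (gC * gA),
     gB * gD - smul q (gD * gB),
     gA * gD - gD * gA,
     gB * gC - smul (q^2) (gC * gB),
     (gA * gD - smul (inverse q) (gB * gC)) * gDi - 1,
     gDi * (gA * gD - smul (inverse q) (gB * gC)) - 1 } \<union>
     {gA * gB, gA * gC, gC * gD, gB * gD}"
  by (simp add: rels_DT_def rels_U_def detq_def fmul_eq fscal_eq smul_def)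

locale qc =
  fixes q :: complex
  assumes qnz: "q \<noteq> 0"
begin

abbreviation J where "J \<equiv> ideal_DT q"

definition eqv :: "fa \<Rightarrow> fa \<Rightarrow> bool" (infix "\<approx>" 50) where
  "x \<approx> y \<longleftrightarrow> x - y \<in> J"

lemma J_add: "x \<in> J \<Longrightarrow> y \<in> J \<Longrightarrow> x + y \<in> J"
  unfolding ideal_DT_def by (rule gen_ideal.add)
lemma J_zero: "0 \<in> J"
  unfolding ideal_DT_def by (rule gen_ideal.zero)
lemma J_lmul: "y \<in> J \<Longrightarrow> x * y \<in> J"
  unfolding ideal_DT_def fmul_eq[symmetric] by (rule gen_ideal.lmul)
lemma J_rmul: "y \<in> J \<Longrightarrow> y * x \<in> J"
  unfolding ideal_DT_def fmul_eq[symmetric] by (rule gen_ideal.rmul)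
lemma J_gen: "r \<in> rels_DT q \<Longrightarrow> r \<in> J"
  unfolding ideal_DT_def by (rule gen_ideal.gen)
lemma J_uminus: "y \<in> J \<Longrightarrow> - y \<in> J"
  using J_lmul[of y "-1"] by simp
lemma J_diff: "x \<in> J \<Longrightarrow> y \<in> J \<Longrightarrow> x - y \<in> J"
  using J_add[of x "- y"] J_uminus[of y] by simp
lemma J_sc_cancel: "smul c x \<in> J \<Longrightarrow> c \<noteq> 0 \<Longrightarrow> x \<in> J"
  using J_lmul[of "smul c x" "sc (inverse c)"] by (simp add: smul_def sc_mult_assoc)

lemma eqv_refl[simp, intro]: "x \<approx> x"
  by (simp add: eqv_def J_zero)
lemma eqv_sym: "x \<approx> y \<Longrightarrow> y \<approx> x"
proof -
  assume "x \<approx> y"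
  then have "- (x - y) \<in> J" unfolding eqv_def by (rule J_uminus)
  then show ?thesis unfolding eqv_def by simp
qed
lemma eqv_trans[trans]: "x \<approx> y \<Longrightarrow> y \<approx> z \<Longrightarrow> x \<approx> z"
proof -
  assume "x \<approx> y" "y \<approx> z"
  then have "(x - y) + (y - z) \<in> J" unfolding eqv_def by (rule J_add)
  then show ?thesis unfolding eqv_def by simp
qed
lemma eqv_add: "x \<approx> x' \<Longrightarrow> y \<approx> y' \<Longrightarrow> x + y \<approx> x' + y'"
proof -
  assume "x \<approx> x'" "y \<approx> y'"
  then have "(x - x') + (y - y') \<in> J" unfolding eqv_def by (rule J_add)
  moreover have "(x - x') + (y - y') = (x + y) - (x' + y')" by (simp add: algebra_simps)
  ultimately show ?thesis unfolding eqv_def by simp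
qed
lemma eqv_diff: "x \<approx> x' \<Longrightarrow> y \<approx> y' \<Longrightarrow> x - y \<approx> x' - y'"
proof -
  assume "x \<approx> x'" "y \<approx> y'"
  then have "(x - x') - (y - y') \<in> J" unfolding eqv_def by (rule J_diff)
  moreover have "(x - x') - (y - y') = (x - y) - (x' - y')" by (simp add: algebra_simps)
  ultimately show ?thesis unfolding eqv_def by simp
qed
lemma eqv_uminus: "x \<approx> x' \<Longrightarrow> - x \<approx> - x'"
proof -
  assume "x \<approx> x'"
  then have "- (x - x') \<in> J" unfolding eqv_def by (rule J_uminus)
  moreover have "- (x - x') = (- x) - (- x')" by (simp add: algebra_simps)
  ultimately show ?thesis unfolding eqv_def by simp
qed
lemma eqv_lmul: "x \<approx> x' \<Longrightarrow> y * x \<approx> y * x'"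
proof -
  assume "x \<approx> x'"
  then have "y * (x - x') \<in> J" unfolding eqv_def by (rule J_lmul)
  then show ?thesis unfolding eqv_def by (simp add: right_diff_distrib)
qed
lemma eqv_rmul: "x \<approx> x' \<Longrightarrow> x * y \<approx> x' * y"
proof -
  assume "x \<approx> x'"
  then have "(x - x') * y \<in> J" unfolding eqv_def by (rule J_rmul)
  then show ?thesis unfolding eqv_def by (simp add: left_diff_distrib)
qed
lemma eqv_mult: "x \<approx> x' \<Longrightarrow> y \<approx> y' \<Longrightarrow> x * y \<approx> x' * y'"
  using eqv_lmul eqv_rmul eqv_trans by blast
lemma eqv_ctx: "x \<approx> x' \<Longrightarrow> l * x * r \<approx> l * x' * r"
  by (intro eqv_lmul eqv_rmul)
lemma eqv_sc: "x \<approx> x' \<Longrightarrow> smul c x \<approx> smul c x'"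
  unfolding smul_def by (rule eqv_lmul)
lemma eqv_0_iff: "x \<approx> 0 \<longleftrightarrow> x \<in> J"
  by (simp add: eqv_def)
lemma eqv_sc_cancel: "smul c x \<approx> smul c y \<Longrightarrow> c \<noteq> 0 \<Longrightarrow> x \<approx> y"
  unfolding eqv_def using J_sc_cancel by (simp add: smul_diff[symmetric])
lemma eqv_subst_eq: "x = x' \<Longrightarrow> x \<approx> x'" by simp

lemma rw2: "x * y \<approx> v \<Longrightarrow> x * (y * r) \<approx> v * r"
  using eqv_rmul[of "x * y" v r] by (simp add: mult.assoc)
lemma rw3: "x * (y * z) \<approx> v \<Longrightarrow> x * (y * (z * r)) \<approx> v * r"
  using eqv_rmul[of "x * (y * z)" v r] by (simp add: mult.assoc)

abbreviation A where "A \<equiv> gA"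
abbreviation B where "B \<equiv> gB"
abbreviation C where "C \<equiv> gC"
abbreviation D where "D \<equiv> gD"
abbreviation I where "I \<equiv> gDi"

definition Dq where "Dq = A * D - smul (inverse q) (B * C)"

lemma r1: "A * B \<approx> smul (inverse q) (B * A)"
proof -
  have "A * B - smul (inverse q) (B * A) \<in> rels_DT q" unfolding rels_ring by blast
  then show ?thesis unfolding eqv_def by (rule J_gen)
qed
lemma r2: "C * D \<approx> smul (inverse q) (D * C)"
proof -
  have "C * D - smul (inverse q) (D * C) \<in> rels_DT q" unfolding rels_ring by blast
  then show ?thesis unfolding eqv_def by (rule J_gen)
qed
lemma r3: "A * C \<approx> smul q (C * A)"
proof -
  have "A * C - smul q (C * A) \<in> rels_DT q" unfolding rels_ring by blast
  then show ?thesis unfolding eqv_def by (rule J_gen)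
qed
lemma r4: "B * D \<approx> smul q (D * B)"
proof -
  have "B * D - smul q (D * B) \<in> rels_DT q" unfolding rels_ring by blast
  then show ?thesis unfolding eqv_def by (rule J_gen)
qed
lemma AD: "A * D \<approx> D * A"
proof -
  have "A * D - D * A \<in> rels_DT q" unfolding rels_ring by blast
  then show ?thesis unfolding eqv_def by (rule J_gen)
qed
lemma BC: "B * C \<approx> smul (q^2) (C * B)"
proof -
  have "B * C - smul (q^2) (C * B) \<in> rels_DT q" unfolding rels_ring by blast
  then show ?thesis unfolding eqv_def by (rule J_gen)
qed
lemma DqI: "Dq * I \<approx> 1"
proof -
  have "Dq * I - 1 \<in> rels_DT q" unfolding rels_ring Dq_def by blast
  then show ?thesis unfolding eqv_def by (rule J_gen)
qed
lemma IDq: "I * Dq \<approx> 1"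
proof -
  have "I * Dq - 1 \<in> rels_DT q" unfolding rels_ring Dq_def by blast
  then show ?thesis unfolding eqv_def by (rule J_gen)
qed
lemma AB: "A * B \<approx> 0"
proof -
  have "A * B - 0 \<in> rels_DT q" unfolding rels_ring by simp
  then show ?thesis unfolding eqv_def by (rule J_gen)
qed
lemma AC: "A * C \<approx> 0"
proof -
  have "A * C - 0 \<in> rels_DT q" unfolding rels_ring by simp
  then show ?thesis unfolding eqv_def by (rule J_gen)
qed
lemma CD: "C * D \<approx> 0"
proof -
  have "C * D - 0 \<in> rels_DT q" unfolding rels_ring by simp
  then show ?thesis unfolding eqv_def by (rule J_gen)
qed
lemma BD: "B * D \<approx> 0"
proof -
  have "B * D - 0 \<in> rels_DT q" unfolding rels_ring by simp
  then show ?thesis unfolding eqv_def by (rule J_gen)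
qed

lemma BA: "B * A \<approx> 0"
proof -
  have "smul (inverse q) (B * A) \<approx> 0" using r1 AB by (meson eqv_sym eqv_trans)
  then have "smul (inverse q) (B * A) \<approx> smul (inverse q) 0" by simp
  then show ?thesis by (rule eqv_sc_cancel) (simp add: qnz)
qed
lemma CA: "C * A \<approx> 0"
proof -
  have "smul q (C * A) \<approx> 0" using r3 AC by (meson eqv_sym eqv_trans)
  then have "smul q (C * A) \<approx> smul q 0" by simp
  then show ?thesis by (rule eqv_sc_cancel) (simp add: qnz)
qed
lemma DC: "D * C \<approx> 0"
proof -
  have "smul (inverse q) (D * C) \<approx> 0" using r2 CD by (meson eqv_sym eqv_trans)
  then have "smul (inverse q) (D * C) \<approx> smul (inverse q) 0" by simp
  then show ?thesis by (rule eqv_sc_cancel) (simp add: qnz)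
qed
lemma DB: "D * B \<approx> 0"
proof -
  have "smul q (D * B) \<approx> 0" using r4 BD by (meson eqv_sym eqv_trans)
  then have "smul q (D * B) \<approx> smul q 0" by simp
  then show ?thesis by (rule eqv_sc_cancel) (simp add: qnz)
qed

end



context qc
begin

lemma eqv_smul_eq: "smul a x \<approx> smul b y \<Longrightarrow> a = b \<Longrightarrow> smul a x \<approx> smul b y" by simp

definition qcm :: "fa \<Rightarrow> fa \<Rightarrow> complex \<Rightarrow> bool" where
  "qcm x y a \<longleftrightarrow> x * y \<approx> smul a (y * x)"

lemma qcm_mult_left: assumes "qcm x y a" "qcm x' y b" shows "qcm (x * x') y (a * b)"
proof -
  have "x * x' * y = x * (x' * y)" by (simp add: mult.assoc)
  also have "\<dots> \<approx> x * smul b (y * x')" using assms(2) unfolding qcm_def by (rule eqv_lmul)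
  also have "\<dots> = smul b ((x * y) * x')" by (simp add: mult.assoc)
  also have "\<dots> \<approx> smul b (smul a (y * x) * x')" using assms(1) unfolding qcm_def
    by (intro eqv_sc eqv_rmul)
  also have "\<dots> = smul (a * b) (y * (x * x'))" by (simp add: mult.assoc mult.commute)
  finally show ?thesis unfolding qcm_def .
qed

lemma qcm_mult_right: assumes "qcm x y a" "qcm x y' b" shows "qcm x (y * y') (a * b)"
proof -
  have "x * (y * y') = (x * y) * y'" by (simp add: mult.assoc)
  also have "\<dots> \<approx> smul a (y * x) * y'" using assms(1) unfolding qcm_def by (rule eqv_rmul)
  also have "\<dots> = smul a (y * (x * y'))" by (simp add: mult.assoc)
  also have "\<dots> \<approx> smul a (y * smul b (y' * x))" using assms(2) unfolding qcm_def
    by (intro eqv_sc eqv_lmul)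
  also have "\<dots> = smul (a * b) ((y * y') * x)" by (simp add: mult.assoc)
  finally show ?thesis unfolding qcm_def .
qed

lemma qcm_refl: "qcm x x 1" by (simp add: qcm_def)

lemma qcm_sym: assumes "qcm x y a" "a \<noteq> 0" shows "qcm y x (inverse a)"
proof -
  have "smul (inverse a) (x * y) \<approx> smul (inverse a) (smul a (y * x))"
    using assms(1) unfolding qcm_def by (rule eqv_sc)
  also have "\<dots> = y * x" using assms(2) by simp
  finally show ?thesis unfolding qcm_def by (rule eqv_sym)
qed

lemma qcm_cong: "qcm x y a \<Longrightarrow> a = b \<Longrightarrow> qcm x y b" by simp

lemma qcm_one_left: "qcm 1 y 1" by (simp add: qcm_def)
lemma qcm_one_right: "qcm x 1 1" by (simp add: qcm_def)

lemma qcm_power_left: "qcm x y a \<Longrightarrow> qcm (x ^ n) y (a ^ n)"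
proof (induction n)
  case 0 then show ?case by (simp add: qcm_one_left)
next
  case (Suc n)
  then have "qcm (x * x ^ n) y (a * a ^ n)" by (intro qcm_mult_left)
  then show ?case by simp
qed
lemma qcm_power_right: "qcm x y a \<Longrightarrow> qcm x (y ^ n) (a ^ n)"
proof (induction n)
  case 0 then show ?case by (simp add: qcm_one_right)
next
  case (Suc n)
  then have "qcm x (y * y ^ n) (a * a ^ n)" by (intro qcm_mult_right)
  then show ?case by simp
qed

lemma qcm_use: "qcm x y a \<Longrightarrow> l * (x * (y * r)) \<approx> smul a (l * (y * (x * r)))"
proof -
  assume h: "qcm x y a"
  have "l * (x * (y * r)) = l * ((x * y) * r)" by (simp add: mult.assoc)
  also have "\<dots> \<approx> l * (smul a (y * x) * r)" using h unfolding qcm_def by (intro eqv_lmul eqv_rmul)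
  also have "\<dots> = smul a (l * (y * (x * r)))" by (simp add: mult.assoc)
  finally show ?thesis .
qed

lemma qcm_use2: "qcm x y a \<Longrightarrow> x * (y * r) \<approx> smul a (y * (x * r))"
  using qcm_use[of x y a 1 r] by simp
lemma qcm_use3: "qcm x y a \<Longrightarrow> x * y \<approx> smul a (y * x)"
  by (simp add: qcm_def)

lemma eqv_zero_ctx: "x * y \<approx> 0 \<Longrightarrow> l * (x * (y * r)) \<approx> 0"
proof -
  assume "x * y \<approx> 0"
  then have "l * ((x * y) * r) \<approx> l * (0 * r)" by (intro eqv_lmul eqv_rmul)
  then show ?thesis by (simp add: mult.assoc)
qed

lemma eqv_zero_ctx2: "x * y \<approx> 0 \<Longrightarrow> x * (y * r) \<approx> 0"
  using eqv_zero_ctx[of x y 1 r] by simp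
lemma eqv_zero_ctx3: "x * y \<approx> 0 \<Longrightarrow> l * (x * y) \<approx> 0"
  using eqv_zero_ctx[of x y l 1] by simp

lemma qcm_orth: "x * y \<approx> 0 \<Longrightarrow> qcm x y 0"
  by (simp add: qcm_def)

lemma Dq_A: "qcm A Dq 1"
proof -
  have "A * Dq = A * (A * D) - smul (inverse q) (A * (B * C))"
    by (simp add: Dq_def algebra_simps)
  also have "\<dots> \<approx> A * (D * A) - smul (inverse q) (B * (C * A))"
  proof (rule eqv_diff)
    show "A * (A * D) \<approx> A * (D * A)" by (intro eqv_lmul AD)
    have "A * (B * C) \<approx> 0" by (intro eqv_zero_ctx2 AB)
    moreover have "B * (C * A) \<approx> 0" by (intro eqv_zero_ctx3 CA)
    ultimately show "smul (inverse q) (A * (B * C)) \<approx> smul (inverse q) (B * (C * A))"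
      by (intro eqv_sc) (meson eqv_sym eqv_trans)
  qed
  also have "\<dots> = Dq * A" by (simp add: Dq_def algebra_simps)
  finally show ?thesis by (simp add: qcm_def)
qed

lemma Dq_D: "qcm D Dq 1"
proof -
  have "D * Dq = D * (A * D) - smul (inverse q) (D * (B * C))"
    by (simp add: Dq_def algebra_simps)
  also have "\<dots> \<approx> (A * D) * D - smul (inverse q) 0"
  proof (rule eqv_diff)
    show "D * (A * D) \<approx> (A * D) * D" by (intro rw2 eqv_sym[OF AD])
    show "smul (inverse q) (D * (B * C)) \<approx> smul (inverse q) 0" by (intro eqv_sc eqv_zero_ctx2 DB)
  qed
  also have "\<dots> \<approx> (A * D) * D - smul (inverse q) (B * (C * D))"
    by (intro eqv_diff eqv_refl eqv_sc eqv_sym[OF eqv_zero_ctx3] CD)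
  also have "\<dots> = Dq * D" by (simp add: Dq_def algebra_simps)
  finally show ?thesis by (simp add: qcm_def)
qed

lemma Dq_C: "qcm C Dq (inverse (q^2))"
proof -
  have "C * Dq = C * (A * D) - smul (inverse q) (C * (B * C))"
    by (simp add: Dq_def algebra_simps)
  also have "\<dots> \<approx> 0 - smul (inverse q) (C * (B * C))"
    by (intro eqv_diff eqv_refl eqv_zero_ctx2 CA)
  finally have 1: "C * Dq \<approx> - smul (inverse q) (C * (B * C))" by simp
  have "Dq * C = A * (D * C) - smul (inverse q) (B * (C * C))"
    by (simp add: Dq_def algebra_simps)
  also have "\<dots> \<approx> 0 - smul (inverse q) (smul (q^2) (C * B) * C)"
    by (intro eqv_diff eqv_sc eqv_zero_ctx3 rw2 DC BC)
  finally have 2: "Dq * C \<approx> - smul (inverse q * q^2) (C * (B * C))" by (simp add: mult.assoc)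
  have "smul (inverse (q^2)) (Dq * C) \<approx> smul (inverse (q^2)) (- smul (inverse q * q^2) (C * (B * C)))"
    using 2 by (rule eqv_sc)
  also have "\<dots> = - smul (inverse q) (C * (B * C))" using qnz by (simp add: smul_uminus field_simps)
  finally show ?thesis unfolding qcm_def using 1 by (meson eqv_sym eqv_trans)
qed

lemma Dq_B: "qcm B Dq (q^2)"
proof -
  have "B * Dq = B * (A * D) - smul (inverse q) (B * (B * C))"
    by (simp add: Dq_def algebra_simps)
  also have "\<dots> \<approx> 0 - smul (inverse q) (B * smul (q^2) (C * B))"
    by (intro eqv_diff eqv_sc eqv_lmul eqv_zero_ctx2 BA BC)
  finally have 1: "B * Dq \<approx> - smul (inverse q * q^2) (B * (C * B))" by simp
  have "Dq * B = A * (D * B) - smul (inverse q) (B * (C * B))"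
    by (simp add: Dq_def algebra_simps)
  also have "\<dots> \<approx> 0 - smul (inverse q) (B * (C * B))"
    by (intro eqv_diff eqv_refl eqv_zero_ctx3 DB)
  finally have 2: "Dq * B \<approx> - smul (inverse q) (B * (C * B))" by simp
  have "smul (q^2) (Dq * B) \<approx> smul (q^2) (- smul (inverse q) (B * (C * B)))"
    using 2 by (rule eqv_sc)
  also have "\<dots> = - smul (inverse q * q^2) (B * (C * B))" by (simp add: smul_uminus mult.commute)
  finally show ?thesis unfolding qcm_def using 1 by (meson eqv_sym eqv_trans)
qed

lemma qcm_I_from_Dq: assumes "qcm x Dq a" shows "qcm I x a"
proof -
  have "I * x = I * (x * 1)" by simp
  also have "\<dots> \<approx> I * (x * (Dq * I))" by (intro eqv_lmul eqv_sym[OF DqI])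
  also have "\<dots> = I * ((x * Dq) * I)" by (simp add: mult.assoc)
  also have "\<dots> \<approx> I * (smul a (Dq * x) * I)" using assms unfolding qcm_def by (intro eqv_lmul eqv_rmul)
  also have "\<dots> = smul a ((I * Dq) * (x * I))" by (simp add: mult.assoc)
  also have "\<dots> \<approx> smul a (1 * (x * I))" by (intro eqv_sc eqv_rmul IDq)
  finally show ?thesis unfolding qcm_def by simp
qed

lemma qcm_orth2: "x * y \<approx> 0 \<Longrightarrow> y * x \<approx> 0 \<Longrightarrow> qcm x y a"
  unfolding qcm_def by (metis eqv_sc eqv_sym eqv_trans smul_zero)

lemma qcm_0_sym: "qcm x y 0 \<Longrightarrow> qcm y x 0 \<Longrightarrow> qcm x y a"
  unfolding qcm_def by (intro qcm_orth2[unfolded qcm_def]) simp_all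

lemma qIA: "qcm I A 1" by (rule qcm_I_from_Dq[OF Dq_A])
lemma qID: "qcm I D 1" by (rule qcm_I_from_Dq[OF Dq_D])
lemma qIC: "qcm I C (inverse (q^2))" by (rule qcm_I_from_Dq[OF Dq_C])
lemma qIB: "qcm I B (q^2)" by (rule qcm_I_from_Dq[OF Dq_B])
lemma qAI: "qcm A I 1" using qcm_sym[OF qIA] by simp
lemma qDI: "qcm D I 1" using qcm_sym[OF qID] by simp
lemma qCI: "qcm C I (q^2)" using qcm_sym[OF qIC] qnz by simp
lemma qBI: "qcm B I (inverse (q^2))" using qcm_sym[OF qIB] qnz by simp
lemma qII: "qcm I I 1" by (rule qcm_refl)
lemma qAA: "qcm A A 1" by (rule qcm_refl)
lemma qBB: "qcm B B 1" by (rule qcm_refl)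
lemma qCC: "qcm C C 1" by (rule qcm_refl)
lemma qDD: "qcm D D 1" by (rule qcm_refl)
lemma qAD: "qcm A D 1" using AD by (simp add: qcm_def)
lemma qDA: "qcm D A 1" using qcm_sym[OF qAD] by simp
lemma qBC: "qcm B C (q^2)" using BC by (simp add: qcm_def)
lemma qCB: "qcm C B (inverse (q^2))" using qcm_sym[OF qBC] qnz by simp
lemma qAB: "qcm A B 0" using AB by (simp add: qcm_def)
lemma qBA: "qcm B A 0" using BA by (simp add: qcm_def)
lemma qAC: "qcm A C 0" using AC by (simp add: qcm_def)
lemma qCA: "qcm C A 0" using CA by (simp add: qcm_def)
lemma qDB: "qcm D B 0" using DB by (simp add: qcm_def)
lemma qBD: "qcm B D 0" using BD by (simp add: qcm_def)
lemma qDC: "qcm D C 0" using DC by (simp add: qcm_def)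
lemma qCD: "qcm C D 0" using CD by (simp add: qcm_def)

lemmas qletters = qAA qAB qAC qAD qAI qBA qBB qBC qBD qBI qCA qCB qCC qCD qCI
  qDA qDB qDC qDD qDI qIA qIB qIC qID qII

end



definition Zf :: fa where "Zf = gDi * (gA * gD)"
definition Ef :: fa where "Ef = gDi * (gB * gC)"

lemma single_word: "Poly_Mapping.single w (1::complex) = foldr (\<lambda>g acc. fgen g * acc) w 1"
proof (induction w)
  case Nil
  have "Poly_Mapping.single [] (1::complex) = Poly_Mapping.single 0 1" by (simp add: zero_list_def)
  then show ?case by simp
next
  case (Cons g w) then show ?case by (simp add: fgen_mult_single[symmetric])
qed

lemma single_smul: "Poly_Mapping.single w c = smul c (Poly_Mapping.single w 1)"
  by (simp add: smul_def mult_single)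

context qc
begin

lemma qcm_add_right: "qcm z x a \<Longrightarrow> qcm z y a \<Longrightarrow> qcm z (x + y) a"
  unfolding qcm_def by (simp add: distrib_left distrib_right smul_add eqv_add)
lemma qcm_smul_right: "qcm z x a \<Longrightarrow> qcm z (smul c x) a"
  unfolding qcm_def using eqv_sc[of "z * x" "smul a (x * z)" c] by (simp add: mult.commute)
lemma qcm_zero_right: "qcm z 0 a"
  unfolding qcm_def by simp

lemma central_all:
  assumes "\<And>g. qcm z (fgen g) 1"
  shows "qcm z p 1"
proof (induction p rule: pm_induct)
  case zero then show ?case by (rule qcm_zero_right)
next
  case (add x y) then show ?case by (rule qcm_add_right)
next
  case (single w c)
  have "qcm z (foldr (\<lambda>g acc. fgen g * acc) w 1) 1"
  proof (induction w)
    case Nil then show ?case by (simp add: qcm_one_right)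
  next
    case (Cons g w) then show ?case using qcm_mult_right[OF assms[of g] Cons] by simp
  qed
  then show ?case by (subst single_smul) (intro qcm_smul_right, simp add: single_word)
qed

lemma central_all_sym: assumes "\<And>g. qcm z (fgen g) 1" shows "qcm p z 1"
  using qcm_sym[OF central_all[OF assms, of p]] by simp

lemma qcm_ZA: "qcm Zf A 1" unfolding Zf_def by (rule qcm_cong, (rule qcm_mult_left qcm_mult_right qletters)+, simp)
lemma qcm_ZD: "qcm Zf D 1" unfolding Zf_def by (rule qcm_cong, (rule qcm_mult_left qcm_mult_right qletters)+, simp)
lemma qcm_ZI: "qcm Zf I 1" unfolding Zf_def by (rule qcm_cong, (rule qcm_mult_left qcm_mult_right qletters)+, simp)
lemma qcm_ZB: "qcm Zf B 1" unfolding Zf_def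
  by (rule qcm_0_sym; rule qcm_cong, (rule qcm_mult_left qcm_mult_right qletters)+, simp)
lemma qcm_ZC: "qcm Zf C 1" unfolding Zf_def
  by (rule qcm_0_sym; rule qcm_cong, (rule qcm_mult_left qcm_mult_right qletters)+, simp)

lemma qcm_EA: "qcm Ef A 1" unfolding Ef_def
  by (rule qcm_0_sym; rule qcm_cong, (rule qcm_mult_left qcm_mult_right qletters)+, simp)
lemma qcm_ED: "qcm Ef D 1" unfolding Ef_def
  by (rule qcm_0_sym; rule qcm_cong, (rule qcm_mult_left qcm_mult_right qletters)+, simp)
lemma qcm_EI: "qcm Ef I 1" unfolding Ef_def by (rule qcm_cong, (rule qcm_mult_left qcm_mult_right qletters)+, simp add: qnz)
lemma qcm_EB: "qcm Ef B 1" unfolding Ef_def by (rule qcm_cong, (rule qcm_mult_left qcm_mult_right qletters)+, simp add: qnz)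
lemma qcm_EC: "qcm Ef C 1" unfolding Ef_def by (rule qcm_cong, (rule qcm_mult_left qcm_mult_right qletters)+, simp add: qnz)

lemma Z_central: "qcm Zf p 1"
proof (rule central_all)
  fix g show "qcm Zf (fgen g) 1"
    by (cases g) (simp_all add: gA_def[symmetric] gB_def[symmetric] gC_def[symmetric] gD_def[symmetric]
       gDi_def[symmetric] qcm_ZA qcm_ZB qcm_ZC qcm_ZD qcm_ZI)
qed
lemma E_central: "qcm Ef p 1"
proof (rule central_all)
  fix g show "qcm Ef (fgen g) 1"
    by (cases g) (simp_all add: gA_def[symmetric] gB_def[symmetric] gC_def[symmetric] gD_def[symmetric]
       gDi_def[symmetric] qcm_EA qcm_EB qcm_EC qcm_ED qcm_EI)
qed
lemma Z_central': "qcm p Zf 1" using qcm_sym[OF Z_central[of p]] by simp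
lemma E_central': "qcm p Ef 1" using qcm_sym[OF E_central[of p]] by simp

end



definition pw :: "fa \<Rightarrow> fa \<Rightarrow> int \<Rightarrow> fa" where
  "pw x xi k = (if 0 \<le> k then x ^ nat k else xi ^ nat (- k))"

lemma pw_0[simp]: "pw x xi 0 = 1" by (simp add: pw_def)

context qc
begin

lemma ZmE: "Zf - smul (inverse q) Ef \<approx> 1"
proof -
  have "I * Dq = Zf - smul (inverse q) Ef" by (simp add: Dq_def Zf_def Ef_def algebra_simps)
  then show ?thesis using IDq by simp
qed

lemma ZE: "Zf * Ef \<approx> 0"
proof -
  have "qcm Zf Ef 0" unfolding Zf_def Ef_def
    by (rule qcm_cong, (rule qcm_mult_left qcm_mult_right qletters)+, simp)
  then show ?thesis by (simp add: qcm_def)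
qed
lemma EZ: "Ef * Zf \<approx> 0"
proof -
  have "qcm Ef Zf 0" unfolding Zf_def Ef_def
    by (rule qcm_cong, (rule qcm_mult_left qcm_mult_right qletters)+, simp)
  then show ?thesis by (simp add: qcm_def)
qed

lemma one_split: "x \<approx> Zf * x - smul (inverse q) (Ef * x)"
proof -
  have "x = 1 * x" by simp
  also have "\<dots> \<approx> (Zf - smul (inverse q) Ef) * x" by (intro eqv_rmul eqv_sym[OF ZmE])
  also have "\<dots> = Zf * x - smul (inverse q) (Ef * x)" by (simp add: algebra_simps)
  finally show ?thesis .
qed

lemma S0_absorb: "Ef * x \<approx> 0 \<Longrightarrow> Zf * x \<approx> x"
proof -
  assume h: "Ef * x \<approx> 0"
  have "x \<approx> Zf * x - smul (inverse q) (Ef * x)" by (rule one_split)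
  also have "\<dots> \<approx> Zf * x - smul (inverse q) 0" by (intro eqv_diff eqv_refl eqv_sc h)
  finally show ?thesis by (simp add: eqv_sym)
qed

lemma S1_absorb: "Zf * x \<approx> 0 \<Longrightarrow> Ef * x \<approx> smul (- q) x"
proof -
  assume h: "Zf * x \<approx> 0"
  have "x \<approx> Zf * x - smul (inverse q) (Ef * x)" by (rule one_split)
  also have "\<dots> \<approx> 0 - smul (inverse q) (Ef * x)" by (intro eqv_diff eqv_refl h)
  finally have "smul (- q) x \<approx> smul (- q) (0 - smul (inverse q) (Ef * x))" by (rule eqv_sc)
  also have "smul (- q) (0 - smul (inverse q) (Ef * x)) = Ef * x"
    using qnz by (simp add: smul_uminus smul_uminus_left)
  finally show ?thesis by (rule eqv_sym)
qed

lemma ZZ: "Zf * Zf \<approx> Zf"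
  by (rule S0_absorb[OF EZ])
lemma EE: "Ef * Ef \<approx> smul (- q) Ef"
  by (rule S1_absorb[OF ZE])

section \<open>Powers with inverses\<close>

lemma pw_nonneg: "0 \<le> k \<Longrightarrow> pw x xi k = x ^ nat k" by (simp add: pw_def)
lemma pw_neg: "k < 0 \<Longrightarrow> pw x xi k = xi ^ nat (- k)" by (simp add: pw_def)

lemma step_up:
  assumes xx: "x * xi \<approx> smul \<kappa> e" and ee: "e * e \<approx> smul \<nu> e"
  shows "e * (x * pw x xi k) \<approx> smul (if k < 0 then \<kappa> * \<nu> else 1) (e * pw x xi (k + 1))"
proof (cases "k < 0")
  case False
  then have "pw x xi (k + 1) = x * pw x xi k"
    by (simp add: pw_def nat_add_distrib)
  then show ?thesis using False by simp
next
  case True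
  define n where "n = nat (- k - 1)"
  have pk: "pw x xi k = xi * xi ^ n" using True by (simp add: pw_def n_def nat_diff_distrib'
     flip: power_Suc)
  have pk1: "pw x xi (k + 1) = xi ^ n" using True by (simp add: pw_def n_def)
  have "e * (x * pw x xi k) = e * ((x * xi) * xi ^ n)" by (simp add: pk mult.assoc)
  also have "\<dots> \<approx> e * (smul \<kappa> e * xi ^ n)" by (intro eqv_lmul eqv_rmul xx)
  also have "\<dots> = smul \<kappa> ((e * e) * xi ^ n)" by (simp add: mult.assoc)
  also have "\<dots> \<approx> smul \<kappa> (smul \<nu> e * xi ^ n)" by (intro eqv_sc eqv_rmul ee)
  also have "\<dots> = smul (\<kappa> * \<nu>) (e * pw x xi (k + 1))" by (simp add: pk1 mult.commute)
  finally show ?thesis using True by simp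
qed

lemma step_down:
  assumes xx: "xi * x \<approx> smul \<kappa> e" and ee: "e * e \<approx> smul \<nu> e"
  shows "e * (xi * pw x xi k) \<approx> smul (if 0 < k then \<kappa> * \<nu> else 1) (e * pw x xi (k - 1))"
proof (cases "0 < k")
  case False
  then have "pw x xi (k - 1) = xi * pw x xi k"
    by (simp add: pw_def) (smt (verit) Suc_nat_eq_nat_zadd1 power_Suc)
  then show ?thesis using False by simp
next
  case True
  define n where "n = nat (k - 1)"
  have pk: "pw x xi k = x * x ^ n" using True
    by (simp add: pw_def n_def flip: power_Suc) (smt (verit) Suc_nat_eq_nat_zadd1)
  have pk1: "pw x xi (k - 1) = x ^ n" using True by (simp add: pw_def n_def)
  have "e * (xi * pw x xi k) = e * ((xi * x) * x ^ n)" by (simp add: pk mult.assoc)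
  also have "\<dots> \<approx> e * (smul \<kappa> e * x ^ n)" by (intro eqv_lmul eqv_rmul xx)
  also have "\<dots> = smul \<kappa> ((e * e) * x ^ n)" by (simp add: mult.assoc)
  also have "\<dots> \<approx> smul \<kappa> (smul \<nu> e * x ^ n)" by (intro eqv_sc eqv_rmul ee)
  also have "\<dots> = smul (\<kappa> * \<nu>) (e * pw x xi (k - 1))" by (simp add: pk1 mult.commute)
  finally show ?thesis using True by simp
qed

lemma qcm_pw_left:
  assumes "qcm x y a" "qcm xi y (inverse a)" "a \<noteq> 0"
  shows "qcm (pw x xi k) y (a powi k)"
proof (cases "0 \<le> k")
  case True
  then show ?thesis using qcm_power_left[OF assms(1), of "nat k"]
    by (simp add: pw_def power_int_def)
next
  case False
  then show ?thesis using qcm_power_left[OF assms(2), of "nat (- k)"]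
    by (simp add: pw_def power_int_def power_inverse)
qed

lemma qcm_pw_right:
  assumes "qcm x y a" "qcm x yi (inverse a)" "a \<noteq> 0"
  shows "qcm x (pw y yi k) (a powi k)"
proof (cases "0 \<le> k")
  case True
  then show ?thesis using qcm_power_right[OF assms(1), of "nat k"]
    by (simp add: pw_def power_int_def)
next
  case False
  then show ?thesis using qcm_power_right[OF assms(2), of "nat (- k)"]
    by (simp add: pw_def power_int_def power_inverse)
qed

lemma eqv_power: "x \<approx> smul m y \<Longrightarrow> x ^ n \<approx> smul (m ^ n) (y ^ n)"
proof (induction n)
  case 0 then show ?case by simp
next
  case (Suc n)
  then have "x * x ^ n \<approx> smul m y * smul (m ^ n) (y ^ n)" by (intro eqv_mult)
  then show ?case by (simp add: mult.commute)
qed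

lemma pw_scale:
  assumes "xi' \<approx> smul m xi"
  shows "pw x xi' k \<approx> smul (if k < 0 then m ^ nat (- k) else 1) (pw x xi k)"
  using eqv_power[OF assms, of "nat (- k)"] by (simp add: pw_def)

end



definition Ai :: fa where "Ai = gDi * gD"
definition Dv :: fa where "Dv = gDi * gA"
definition Ci :: fa where "Ci = gDi * gB"
definition Bi :: fa where "Bi = gC * gDi"

definition W0 :: "int \<Rightarrow> int \<Rightarrow> fa" where "W0 k l = Zf * (pw gA Ai k * pw gD Dv l)"
definition W1 :: "int \<Rightarrow> int \<Rightarrow> fa" where "W1 k l = Ef * (pw gC Ci k * pw gB Bi l)"

context qc
begin

lemma qcm_auto_helper: "qcm x y a \<Longrightarrow> a = b \<Longrightarrow> qcm x y b" by simp

lemma A_Ai: "A * Ai \<approx> smul 1 Zf"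
  unfolding Ai_def Zf_def using qcm_use2[OF qAI, of D] by simp
lemma Ai_A: "Ai * A \<approx> smul 1 Zf"
  unfolding Ai_def Zf_def using eqv_lmul[OF qcm_use3[OF qDA], of I] by (simp add: mult.assoc)
lemma D_Dv: "D * Dv \<approx> smul 1 Zf"
proof -
  have "D * (I * A) \<approx> smul 1 (I * (D * A))" by (rule qcm_use2[OF qDI])
  also have "\<dots> \<approx> smul 1 (I * smul 1 (A * D))" by (intro eqv_sc eqv_lmul qcm_use3[OF qDA])
  finally show ?thesis unfolding Dv_def Zf_def by simp
qed
lemma Dv_D: "Dv * D \<approx> smul 1 Zf"
  unfolding Dv_def Zf_def by (simp add: mult.assoc)
lemma C_Ci: "C * Ci \<approx> smul 1 Ef"
proof -
  have "C * (I * B) \<approx> smul (q^2) (I * (C * B))" by (rule qcm_use2[OF qCI])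
  also have "\<dots> \<approx> smul (q^2) (I * smul (inverse (q^2)) (B * C))" by (intro eqv_sc eqv_lmul qcm_use3[OF qCB])
  finally show ?thesis unfolding Ci_def Ef_def using qnz by simp
qed
lemma Ci_C: "Ci * C \<approx> smul 1 Ef"
  unfolding Ci_def Ef_def by (simp add: mult.assoc)
lemma B_Bi: "B * Bi \<approx> smul 1 Ef"
proof -
  have "qcm (B * C) I 1" by (rule qcm_cong, (rule qcm_mult_left qcm_mult_right qletters)+, simp add: qnz)
  then have "(B * C) * I \<approx> smul 1 (I * (B * C))" by (rule qcm_use3)
  then show ?thesis unfolding Bi_def Ef_def by (simp add: mult.assoc)
qed
lemma Bi_B: "Bi * B \<approx> smul 1 Ef"
proof -
  have "C * (I * B) \<approx> smul (q^2) (I * (C * B))" by (rule qcm_use2[OF qCI])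
  also have "\<dots> \<approx> smul (q^2) (I * smul (inverse (q^2)) (B * C))" by (intro eqv_sc eqv_lmul qcm_use3[OF qCB])
  finally show ?thesis unfolding Bi_def Ef_def using qnz by (simp add: mult.assoc)
qed

lemma ZZ': "Zf * Zf \<approx> smul 1 Zf" using ZZ by simp

lemma step_up1: "x * xi \<approx> smul 1 e \<Longrightarrow> e * e \<approx> smul 1 e \<Longrightarrow> e * (x * pw x xi k) \<approx> e * pw x xi (k + 1)"
  using step_up[of x xi 1 e 1 k] by (simp cong: if_cong)
lemma step_down1: "xi * x \<approx> smul 1 e \<Longrightarrow> e * e \<approx> smul 1 e \<Longrightarrow> e * (xi * pw x xi k) \<approx> e * pw x xi (k - 1)"
  using step_down[of xi x 1 e 1 k] by (simp cong: if_cong)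
lemma qcm_use2_1: "qcm x y 1 \<Longrightarrow> x * (y * r) \<approx> y * (x * r)"
  using qcm_use2[of x y 1 r] by simp

lemma qcm_D_X0: "qcm D (pw A Ai k) 1"
  using qcm_pw_right[of D A 1 Ai k] unfolding Ai_def
  by (simp add: qletters qcm_mult_right[OF qDI qDD, simplified])
lemma qcm_Dv_X0: "qcm Dv (pw A Ai k) 1"
proof -
  have "qcm Dv A 1" unfolding Dv_def by (rule qcm_cong, (rule qcm_mult_left qcm_mult_right qletters)+, simp)
  moreover have "qcm Dv Ai 1" unfolding Dv_def Ai_def
    by (rule qcm_cong, (rule qcm_mult_left qcm_mult_right qletters)+, simp)
  ultimately show ?thesis using qcm_pw_right[of Dv A 1 Ai k] by simp
qed
lemma qcm_B_X1: "qcm B (pw C Ci k) ((q^2) powi k)"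
proof -
  have "qcm B Ci (inverse (q^2))" unfolding Ci_def
    by (rule qcm_cong, (rule qcm_mult_left qcm_mult_right qletters)+, simp)
  then show ?thesis using qcm_pw_right[of B C "q^2" Ci k] qBC qnz by simp
qed
lemma qcm_Bi_X1: "qcm Bi (pw C Ci k) ((inverse (q^2)) powi k)"
proof -
  have "qcm Bi C (inverse (q^2))" unfolding Bi_def
    by (rule qcm_cong, (rule qcm_mult_left qcm_mult_right qletters)+, simp)
  moreover have "qcm Bi Ci (inverse (inverse (q^2)))" unfolding Bi_def Ci_def
    by (rule qcm_cong, (rule qcm_mult_left qcm_mult_right qletters)+, simp add: qnz)
  ultimately show ?thesis using qcm_pw_right[of Bi C "inverse (q^2)" Ci k] qnz by simp
qed

lemma BZ: "B * Zf \<approx> 0"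
proof -
  have "qcm B Zf 0" unfolding Zf_def by (rule qcm_cong, (rule qcm_mult_left qcm_mult_right qletters)+, simp)
  then show ?thesis by (simp add: qcm_def)
qed
lemma CZ: "C * Zf \<approx> 0"
proof -
  have "qcm C Zf 0" unfolding Zf_def by (rule qcm_cong, (rule qcm_mult_left qcm_mult_right qletters)+, simp)
  then show ?thesis by (simp add: qcm_def)
qed
lemma AE: "A * Ef \<approx> 0"
proof -
  have "qcm A Ef 0" unfolding Ef_def by (rule qcm_cong, (rule qcm_mult_left qcm_mult_right qletters)+, simp)
  then show ?thesis by (simp add: qcm_def)
qed
lemma DE: "D * Ef \<approx> 0"
proof -
  have "qcm D Ef 0" unfolding Ef_def by (rule qcm_cong, (rule qcm_mult_left qcm_mult_right qletters)+, simp)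
  then show ?thesis by (simp add: qcm_def)
qed

section \<open>Left multiplication by generators on the basis\<close>

lemma KA0: "A * W0 k l \<approx> W0 (k + 1) l"
proof -
  have "A * W0 k l \<approx> smul 1 (Zf * (A * (pw A Ai k * pw D Dv l)))"
    unfolding W0_def by (rule qcm_use2[OF Z_central'])
  also have "\<dots> = (Zf * (A * pw A Ai k)) * pw D Dv l" by (simp add: mult.assoc)
  also have "\<dots> \<approx> (Zf * pw A Ai (k + 1)) * pw D Dv l"
    by (intro eqv_rmul step_up1 A_Ai ZZ')
  finally show ?thesis unfolding W0_def by (simp add: mult.assoc)
qed

lemma KD0: "D * W0 k l \<approx> W0 k (l + 1)"
proof -
  have "D * W0 k l \<approx> smul 1 (Zf * (D * (pw A Ai k * pw D Dv l)))"
    unfolding W0_def by (rule qcm_use2[OF Z_central'])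
  also have "\<dots> \<approx> smul 1 (Zf * smul 1 (pw A Ai k * (D * pw D Dv l)))"
    by (intro eqv_sc eqv_lmul qcm_use2 qcm_D_X0)
  also have "\<dots> = Zf * (pw A Ai k * (D * pw D Dv l))" by simp
  also have "\<dots> \<approx> smul 1 (pw A Ai k * (Zf * (D * pw D Dv l)))" by (rule qcm_use2[OF Z_central])
  also have "\<dots> \<approx> smul 1 (pw A Ai k * (Zf * pw D Dv (l + 1)))"
    by (intro eqv_sc eqv_lmul step_up1 D_Dv ZZ')
  also have "\<dots> = pw A Ai k * (Zf * pw D Dv (l + 1))" by simp
  also have "\<dots> \<approx> smul 1 (Zf * (pw A Ai k * pw D Dv (l + 1)))" by (rule qcm_use2[OF Z_central'])
  finally show ?thesis unfolding W0_def by simp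
qed

lemma ZI_split: "Zf * (I * r) \<approx> Zf * (Ai * (Dv * r))"
proof -
  have "Zf * (Ai * (Dv * r)) = Zf * (I * (D * (I * (A * r))))" by (simp add: Ai_def Dv_def mult.assoc)
  also have "\<dots> \<approx> Zf * (I * (I * (D * (A * r))))" by (intro eqv_lmul) (rule qcm_use2_1[OF qDI])
  also have "\<dots> \<approx> Zf * (I * (I * (A * (D * r))))"
    by (intro eqv_lmul) (rule qcm_use2_1[OF qDA])
  also have "\<dots> = Zf * (I * (Zf * r))" by (simp add: Zf_def mult.assoc)
  also have "\<dots> \<approx> Zf * (Zf * (I * r))" by (intro eqv_lmul) (rule qcm_use2_1[OF Z_central'])
  also have "\<dots> = (Zf * Zf) * (I * r)" by (simp add: mult.assoc)
  also have "\<dots> \<approx> Zf * (I * r)" by (intro eqv_rmul ZZ)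
  finally show ?thesis by (rule eqv_sym)
qed

lemma KI0: "I * W0 k l \<approx> W0 (k - 1) (l - 1)"
proof -
  have "I * W0 k l \<approx> smul 1 (Zf * (I * (pw A Ai k * pw D Dv l)))"
    unfolding W0_def by (rule qcm_use2[OF Z_central'])
  also have "\<dots> \<approx> smul 1 (Zf * (Ai * (Dv * (pw A Ai k * pw D Dv l))))"
    by (intro eqv_sc ZI_split)
  also have "\<dots> \<approx> smul 1 (Zf * (Ai * smul 1 (pw A Ai k * (Dv * pw D Dv l))))"
    by (intro eqv_sc eqv_lmul qcm_use2 qcm_Dv_X0)
  also have "\<dots> = (Zf * (Ai * pw A Ai k)) * (Dv * pw D Dv l)" by (simp add: mult.assoc)
  also have "\<dots> \<approx> (Zf * pw A Ai (k - 1)) * (Dv * pw D Dv l)"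
    by (intro eqv_rmul step_down1 Ai_A ZZ')
  also have "\<dots> = Zf * (pw A Ai (k - 1) * (Dv * pw D Dv l))" by (simp add: mult.assoc)
  also have "\<dots> \<approx> smul 1 (pw A Ai (k - 1) * (Zf * (Dv * pw D Dv l)))" by (rule qcm_use2[OF Z_central])
  also have "\<dots> \<approx> smul 1 (pw A Ai (k - 1) * (Zf * pw D Dv (l - 1)))"
    by (intro eqv_sc eqv_lmul step_down1 Dv_D ZZ')
  also have "\<dots> = pw A Ai (k - 1) * (Zf * pw D Dv (l - 1))" by simp
  also have "\<dots> \<approx> smul 1 (Zf * (pw A Ai (k - 1) * pw D Dv (l - 1)))" by (rule qcm_use2[OF Z_central'])
  finally show ?thesis unfolding W0_def by simp
qed

lemma KB0: "B * W0 k l \<approx> 0" unfolding W0_def by (rule eqv_zero_ctx2[OF BZ])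
lemma KC0: "C * W0 k l \<approx> 0" unfolding W0_def by (rule eqv_zero_ctx2[OF CZ])
lemma KA1: "A * W1 k l \<approx> 0" unfolding W1_def by (rule eqv_zero_ctx2[OF AE])
lemma KD1: "D * W1 k l \<approx> 0" unfolding W1_def by (rule eqv_zero_ctx2[OF DE])

lemma EE': "Ef * Ef \<approx> smul (- q) Ef" by (rule EE)

lemma KC1: "C * W1 k l \<approx> smul (if k < 0 then - q else 1) (W1 (k + 1) l)"
proof -
  have "C * W1 k l \<approx> smul 1 (Ef * (C * (pw C Ci k * pw B Bi l)))"
    unfolding W1_def by (rule qcm_use2[OF E_central'])
  also have "\<dots> = (Ef * (C * pw C Ci k)) * pw B Bi l" by (simp add: mult.assoc)
  also have "\<dots> \<approx> smul (if k < 0 then 1 * (- q) else 1) (Ef * pw C Ci (k + 1)) * pw B Bi l"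
    by (intro eqv_rmul step_up C_Ci EE')
  also have "\<dots> = smul (if k < 0 then - q else 1) (W1 (k + 1) l)" by (simp add: W1_def mult.assoc)
  finally show ?thesis .
qed

lemma KB1: "B * W1 k l \<approx> smul ((q^2) powi k * (if l < 0 then - q else 1)) (W1 k (l + 1))"
proof -
  have "B * W1 k l \<approx> smul 1 (Ef * (B * (pw C Ci k * pw B Bi l)))"
    unfolding W1_def by (rule qcm_use2[OF E_central'])
  also have "\<dots> \<approx> smul 1 (Ef * smul ((q^2) powi k) (pw C Ci k * (B * pw B Bi l)))"
    by (intro eqv_sc eqv_lmul qcm_use2 qcm_B_X1)
  also have "\<dots> = smul ((q^2) powi k) (Ef * (pw C Ci k * (B * pw B Bi l)))" by simp
  also have "\<dots> \<approx> smul ((q^2) powi k) (smul 1 (pw C Ci k * (Ef * (B * pw B Bi l))))"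
    by (intro eqv_sc qcm_use2 E_central)
  also have "\<dots> \<approx> smul ((q^2) powi k) (smul 1 (pw C Ci k * smul (if l < 0 then 1 * (- q) else 1) (Ef * pw B Bi (l + 1))))"
    by (intro eqv_sc eqv_lmul step_up B_Bi EE')
  also have "\<dots> = smul ((q^2) powi k * (if l < 0 then - q else 1)) (pw C Ci k * (Ef * pw B Bi (l + 1)))"
    by simp
  also have "\<dots> \<approx> smul ((q^2) powi k * (if l < 0 then - q else 1)) (smul 1 (Ef * (pw C Ci k * pw B Bi (l + 1))))"
    by (intro eqv_sc qcm_use2 E_central')
  also have "\<dots> = smul ((q^2) powi k * (if l < 0 then - q else 1)) (W1 k (l + 1))" by (simp add: W1_def)
  finally show ?thesis .
qed

lemma EI_split: "Ef * (I * r) \<approx> smul (inverse (- q)) (Ef * (Ci * (Bi * r)))"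
proof -
  have "Ef * (Ci * (Bi * r)) = (Ef * Ef) * (I * r)" by (simp add: Ef_def Ci_def Bi_def mult.assoc)
  also have "\<dots> \<approx> smul (- q) Ef * (I * r)" by (intro eqv_rmul EE)
  finally have "smul (inverse (- q)) (Ef * (Ci * (Bi * r))) \<approx> smul (inverse (- q)) (smul (- q) Ef * (I * r))"
    by (rule eqv_sc)
  also have "\<dots> = Ef * (I * r)" using qnz by simp
  finally show ?thesis by (rule eqv_sym)
qed

lemma KI1: "I * W1 k l \<approx> smul (inverse (- q) * (inverse (q^2)) powi k * (if 0 < k then - q else 1)
   * (if 0 < l then - q else 1)) (W1 (k - 1) (l - 1))"
proof -
  have "I * W1 k l \<approx> smul 1 (Ef * (I * (pw C Ci k * pw B Bi l)))"
    unfolding W1_def by (rule qcm_use2[OF E_central'])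
  also have "\<dots> \<approx> smul 1 (smul (inverse (- q)) (Ef * (Ci * (Bi * (pw C Ci k * pw B Bi l)))))"
    by (intro eqv_sc EI_split)
  also have "\<dots> \<approx> smul 1 (smul (inverse (- q)) (Ef * (Ci * smul ((inverse (q^2)) powi k) (pw C Ci k * (Bi * pw B Bi l)))))"
    by (intro eqv_sc eqv_lmul qcm_use2 qcm_Bi_X1)
  also have "\<dots> = smul (inverse (- q) * (inverse (q^2)) powi k) ((Ef * (Ci * pw C Ci k)) * (Bi * pw B Bi l))"
    by (simp add: mult.assoc)
  also have "\<dots> \<approx> smul (inverse (- q) * (inverse (q^2)) powi k) (smul (if 0 < k then 1 * (- q) else 1) (Ef * pw C Ci (k - 1)) * (Bi * pw B Bi l))"
    by (intro eqv_sc eqv_rmul step_down Ci_C EE')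
  also have "\<dots> = smul (inverse (- q) * (inverse (q^2)) powi k * (if 0 < k then - q else 1)) (pw C Ci (k - 1) * 0 + Ef * (pw C Ci (k - 1) * (Bi * pw B Bi l)))"
    by (simp add: mult.assoc)
  also have "\<dots> = smul (inverse (- q) * (inverse (q^2)) powi k * (if 0 < k then - q else 1)) (Ef * (pw C Ci (k - 1) * (Bi * pw B Bi l)))"
    by simp
  also have "\<dots> \<approx> smul (inverse (- q) * (inverse (q^2)) powi k * (if 0 < k then - q else 1)) (smul 1 (pw C Ci (k - 1) * (Ef * (Bi * pw B Bi l))))"
    by (intro eqv_sc qcm_use2 E_central)
  also have "\<dots> \<approx> smul (inverse (- q) * (inverse (q^2)) powi k * (if 0 < k then - q else 1)) (smul 1 (pw C Ci (k - 1) * smul (if 0 < l then 1 * (- q) else 1) (Ef * pw B Bi (l - 1))))"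
    by (intro eqv_sc eqv_lmul step_down Bi_B EE')
  also have "\<dots> = smul (inverse (- q) * (inverse (q^2)) powi k * (if 0 < k then - q else 1) * (if 0 < l then - q else 1)) (pw C Ci (k - 1) * (Ef * pw B Bi (l - 1)))"
    by (simp add: mult.assoc)
  also have "\<dots> \<approx> smul (inverse (- q) * (inverse (q^2)) powi k * (if 0 < k then - q else 1) * (if 0 < l then - q else 1)) (smul 1 (Ef * (pw C Ci (k - 1) * pw B Bi (l - 1))))"
    by (intro eqv_sc qcm_use2 E_central')
  also have "\<dots> = smul (inverse (- q) * (inverse (q^2)) powi k * (if 0 < k then - q else 1)
   * (if 0 < l then - q else 1)) (W1 (k - 1) (l - 1))" by (simp add: W1_def)
  finally show ?thesis .
qed

end



definition pex :: "int \<Rightarrow> int \<Rightarrow> int" where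
  "pex k l = (if k > l then 2 * k * l else if k = l then k * k else 0)"

definition sexp :: "int \<Rightarrow> int \<Rightarrow> int \<Rightarrow> int \<Rightarrow> int" where
  "sexp k l m n =
    (if k > l then
       (if m > n then (-2*k*n)
        else if m = n then (-m*(2*k+m))
        else if k + m > l + n then (-2*n*(k+m))
        else if k + m = l + n then ((k+m)*(2*l-k-m))
        else (2*l*(k+m)))
     else if k = l then
       (if m > n then (-k*(k+2*n))
        else if m = n then 0
        else (k*(k+2*m)))
     else
       (if m > n then
          (if k + m > l + n then (-2*k*(l+n))
           else if k + m = l + n then ((l+n)*(l+n-2*k))
           else (2*m*(l+n)))
        else if m = n then (m*(m+2*l))
        else (2*l*m)))"

lemma sigma_q_sexp: "sigma_q q k l m n = q powi sexp k l m n"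
  unfolding sigma_q_def sexp_def by (simp split: if_split)

lemma sexp_aux: "(k::int) + m = l + n \<Longrightarrow> k = l + n - m" by simp

lemma sexp_cob: "sexp k l m n = 2 * l * m + pex k l + pex m n - pex (k + m) (l + n)"
  unfolding sexp_def pex_def
  by (auto simp: algebra_simps dest!: sexp_aux)


type_synonym bcpt = "(z2 \<times> int \<times> int) \<Rightarrow>\<^sub>0 complex"

definition bmg :: "complex \<Rightarrow> z2 \<times> int \<times> int \<Rightarrow> z2 \<times> int \<times> int \<Rightarrow> complex \<Rightarrow> complex \<Rightarrow> bcpt" where
  "bmg q a b c d = (case (a, b) of ((i, h), (j, g)) \<Rightarrow>
     (\<Sum>e\<in>{Z0, Z1}. Poly_Mapping.single (e, (fst h + fst g, snd h + snd g))
        (c * d * (zdelta i e * zdelta j e * sigma q h g e))))"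

definition bsig :: "complex \<Rightarrow> z2 \<Rightarrow> int \<Rightarrow> int \<Rightarrow> int \<Rightarrow> int \<Rightarrow> complex" where
  "bsig q i k l m n = (if i = Z0 then 1 else q powi (2 * l * m + pex k l + pex m n - pex (k + m) (l + n)))"

lemma bcp_mul_Lx: "bcp_mul q x y = Lx (\<lambda>a c. Lx (\<lambda>b d. bmg q a b c d) y) x"
  by (simp add: bcp_mul_def Lx_def bmg_def)

lemma bmg_single: "bmg q (i, k, l) (j, m, n) c d =
   (if i = j then Poly_Mapping.single (i, k + m, l + n) (c * d * bsig q i k l m n) else 0)"
  by (cases i; cases j) (simp_all add: bmg_def zdelta_def sigma_def sigma_q_sexp sexp_cob bsig_def)

lemma bmg_c0: "bmg q a b 0 d = 0" by (simp add: bmg_def split: prod.split)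
lemma bmg_d0: "bmg q a b c 0 = 0" by (simp add: bmg_def split: prod.split)
lemma bmg_cadd: "bmg q a b (c + c') d = bmg q a b c d + bmg q a b c' d"
  by (simp add: bmg_def distrib_right single_add sum.distrib split: prod.split)
lemma bmg_dadd: "bmg q a b c (d + d') = bmg q a b c d + bmg q a b c d'"
  by (simp add: bmg_def distrib_left distrib_right single_add sum.distrib split: prod.split)

lemma bm_add1: "bcp_mul q (x + x') y = bcp_mul q x y + bcp_mul q x' y"
  unfolding bcp_mul_Lx
proof (rule Lx_add)
  fix a show "Lx (\<lambda>b d. bmg q a b 0 d) y = 0" by (simp add: Lx_def bmg_c0)
next
  fix a c d show "Lx (\<lambda>b da. bmg q a b (c + d) da) y = Lx (\<lambda>b d. bmg q a b c d) y + Lx (\<lambda>b da. bmg q a b d da) y"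
    by (simp add: bmg_cadd Lx_plus_fun)
qed

lemma bm_add2: "bcp_mul q x (y + y') = bcp_mul q x y + bcp_mul q x y'"
proof -
  have h: "\<And>a c. Lx (\<lambda>b d. bmg q a b c d) (y + y') = Lx (\<lambda>b d. bmg q a b c d) y + Lx (\<lambda>b d. bmg q a b c d) y'"
    by (rule Lx_add) (simp_all add: bmg_d0 bmg_dadd)
  show ?thesis unfolding bcp_mul_Lx by (simp only: h Lx_plus_fun)
qed

lemma bm_zero1[simp]: "bcp_mul q 0 y = 0" by (simp add: bcp_mul_def)
lemma bm_zero2[simp]: "bcp_mul q x 0 = 0" by (simp add: bcp_mul_def)

lemma bm_single: "bcp_mul q (Poly_Mapping.single (i, k, l) c) (Poly_Mapping.single (j, m, n) d) =
   (if i = j then Poly_Mapping.single (i, k + m, l + n) (c * d * bsig q i k l m n) else 0)"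
  unfolding bcp_mul_Lx by (simp add: Lx_single bmg_c0 bmg_d0 Lx_def bmg_single)

lemma bm_single': "bcp_mul q (Poly_Mapping.single a c) (Poly_Mapping.single b d) =
   (if fst a = fst b then Poly_Mapping.single (fst a, fst (snd a) + fst (snd b), snd (snd a) + snd (snd b))
     (c * d * bsig q (fst a) (fst (snd a)) (snd (snd a)) (fst (snd b)) (snd (snd b))) else 0)"
  using bm_single[of q "fst a" "fst (snd a)" "snd (snd a)" c "fst b" "fst (snd b)" "snd (snd b)" d]
  by simp

lemma bsig_assoc:
  assumes "q \<noteq> 0"
  shows "bsig q i k l m n * bsig q i (k + m) (l + n) a b = bsig q i m n a b * bsig q i k l (m + a) (n + b)"
proof (cases "i = Z0")
  case True then show ?thesis by (simp add: bsig_def)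
next
  case False
  then show ?thesis using assms
    by (simp add: bsig_def power_int_add[symmetric] algebra_simps)
qed

lemma bm_assoc:
  assumes "q \<noteq> 0"
  shows "bcp_mul q (bcp_mul q x y) z = bcp_mul q x (bcp_mul q y z)"
proof (induction x rule: pm_induct)
  case (single a c)
  show ?case
  proof (induction y rule: pm_induct)
    case (single b d)
    show ?case
    proof (induction z rule: pm_induct)
      case (single e f)
      obtain i k l where a: "a = (i, k, l)" by (cases a) auto
      obtain j m n where b: "b = (j, m, n)" by (cases b) auto
      obtain t u v where e: "e = (t, u, v)" by (cases e) auto
      show ?case using bsig_assoc[OF assms, of t k l m n u v]
        by (simp add: a b e bm_single ac_simps)
    qed (simp_all add: bm_add1 bm_add2)
  qed (simp_all add: bm_add1 bm_add2)
qed (simp_all add: bm_add1 bm_add2)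

lemma pex_00[simp]: "pex 0 0 = 0" by (simp add: pex_def)

lemma bm_one_left: "bcp_mul q bcp_one x = x"
proof (induction x rule: pm_induct)
  case (single a c)
  obtain j m n where a: "a = (j, m, n)" by (cases a) auto
  show ?case by (cases j) (simp_all add: a bcp_one_def bm_add1 bm_single bsig_def)
qed (simp_all add: bm_add2)

definition bsc :: "complex \<Rightarrow> bcpt" where
  "bsc c = Poly_Mapping.single (Z0, 0, 0) c + Poly_Mapping.single (Z1, 0, 0) c"

lemma bsc_single: "bcp_mul q (bsc c) (Poly_Mapping.single (j, m, n) d) = Poly_Mapping.single (j, m, n) (c * d)"
  by (cases j) (simp_all add: bsc_def bm_add1 bm_single bsig_def)

lemma bsc_single_r: "bcp_mul q (Poly_Mapping.single (j, m, n) d) (bsc c) = Poly_Mapping.single (j, m, n) (c * d)"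
  by (cases j) (simp_all add: bsc_def bm_add2 bm_single bsig_def mult.commute)

lemma bsc_comm: "bcp_mul q (bsc c) x = bcp_mul q x (bsc c)"
proof (induction x rule: pm_induct)
  case (single a d)
  obtain j m n where a: "a = (j, m, n)" by (cases a) auto
  show ?case by (simp add: a bsc_single bsc_single_r)
qed (simp_all add: bm_add1 bm_add2)

lemma bsc_1: "bsc 1 = bcp_one" by (simp add: bsc_def bcp_one_def)

lemma bsc_mult: "bcp_mul q (bsc c) (bsc d) = bsc (c * d)"
  by (simp add: bsc_def bm_add2 bsc_single[unfolded bsc_def])

lemma bsc_add: "bsc (c + d) = bsc c + bsc d"
  by (simp add: bsc_def single_add)

lemma bsc_0: "bsc 0 = 0" by (simp add: bsc_def)



lemma bm_uminus1: "bcp_mul q (- x) y = - bcp_mul q x y"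
proof -
  have "bcp_mul q x y + bcp_mul q (- x) y = 0" using bm_add1[of q x "- x" y] by simp
  then show ?thesis by (metis add.commute neg_eq_iff_add_eq_0)
qed
lemma bm_uminus2: "bcp_mul q y (- x) = - bcp_mul q y x"
proof -
  have "bcp_mul q y x + bcp_mul q y (- x) = 0" using bm_add2[of q y x "- x"] by simp
  then show ?thesis by (metis add.commute neg_eq_iff_add_eq_0)
qed
lemma bm_diff1: "bcp_mul q (x - x') y = bcp_mul q x y - bcp_mul q x' y"
  by (simp only: diff_conv_add_uminus bm_add1 bm_uminus1)
lemma bm_diff2: "bcp_mul q y (x - x') = bcp_mul q y x - bcp_mul q y x'"
  by (simp only: diff_conv_add_uminus bm_add2 bm_uminus2)

lemma bm_one_right: "bcp_mul q x bcp_one = x"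
proof (induction x rule: pm_induct)
  case (single a c)
  obtain j m n where a: "a = (j, m, n)" by (cases a) auto
  show ?case by (cases j) (simp_all add: a bcp_one_def bm_add2 bm_single bsig_def)
qed (simp_all add: bm_add1)

definition psig :: "complex \<Rightarrow> gen \<Rightarrow> bcpt" where
  "psig q g = (case g of
      Ga \<Rightarrow> Poly_Mapping.single (Z0, 1, 0) 1
    | Gb \<Rightarrow> Poly_Mapping.single (Z1, 0, 1) 1
    | Gc \<Rightarrow> Poly_Mapping.single (Z1, 1, 0) 1
    | Gd \<Rightarrow> Poly_Mapping.single (Z0, 0, 1) 1
    | GDi \<Rightarrow> Poly_Mapping.single (Z0, -1, -1) 1 + Poly_Mapping.single (Z1, -1, -1) (-1))"

definition psiw :: "complex \<Rightarrow> gen list \<Rightarrow> bcpt" where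
  "psiw q w = foldr (\<lambda>g acc. bcp_mul q (psig q g) acc) w bcp_one"

definition psi :: "complex \<Rightarrow> fa \<Rightarrow> bcpt" where
  "psi q p = Lx (\<lambda>w c. bcp_mul q (bsc c) (psiw q w)) p"

lemma psi_add: "psi q (x + y) = psi q x + psi q y"
  unfolding psi_def by (rule Lx_add) (simp_all add: bsc_0 bsc_add bm_add1)

lemma psi_single: "psi q (Poly_Mapping.single w c) = bcp_mul q (bsc c) (psiw q w)"
  unfolding psi_def by (rule Lx_single) (simp add: bsc_0)

lemma psi_zero[simp]: "psi q 0 = 0" by (simp add: psi_def)

lemma psi_uminus: "psi q (- x) = - psi q x"
proof -
  have "psi q x + psi q (- x) = 0" using psi_add[of q x "- x"] by simp
  then show ?thesis by (metis add.commute neg_eq_iff_add_eq_0)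
qed
lemma psi_diff: "psi q (x - y) = psi q x - psi q y"
  by (simp only: diff_conv_add_uminus psi_add psi_uminus)

context qc
begin

abbreviation bm where "bm \<equiv> bcp_mul q"

lemma bm_assoc': "bm (bm x y) z = bm x (bm y z)" by (rule bm_assoc[OF qnz])

lemma psiw_append: "psiw q (v @ w) = bm (psiw q v) (psiw q w)"
  by (induction v) (simp_all add: psiw_def bm_one_left bm_assoc')

lemma bsc_pull: "bm x (bm (bsc c) y) = bm (bsc c) (bm x y)"
proof -
  have "bm x (bm (bsc c) y) = bm (bm x (bsc c)) y" by (simp only: bm_assoc')
  also have "bm x (bsc c) = bm (bsc c) x" by (rule bsc_comm[symmetric])
  also have "bm (bm (bsc c) x) y = bm (bsc c) (bm x y)" by (simp only: bm_assoc')
  finally show ?thesis .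
qed

lemma psi_mult: "psi q (x * y) = bm (psi q x) (psi q y)"
proof (induction x rule: pm_induct)
  case (single v a)
  show ?case
  proof (induction y rule: pm_induct)
    case (single w b)
    have "psi q (Poly_Mapping.single v a * Poly_Mapping.single w b) = bm (bsc (a * b)) (psiw q (v @ w))"
      by (simp add: mult_single plus_list_def psi_single)
    also have "\<dots> = bm (bm (bsc a) (bsc b)) (bm (psiw q v) (psiw q w))"
      by (simp add: bsc_mult psiw_append)
    also have "\<dots> = bm (bsc a) (bm (bsc b) (bm (psiw q v) (psiw q w)))"
      by (simp only: bm_assoc')
    also have "bm (bsc b) (bm (psiw q v) (psiw q w)) = bm (psiw q v) (bm (bsc b) (psiw q w))"
      by (rule bsc_pull[symmetric])
    also have "bm (bsc a) (bm (psiw q v) (bm (bsc b) (psiw q w))) = bm (bm (bsc a) (psiw q v)) (bm (bsc b) (psiw q w))"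
      by (simp only: bm_assoc')
    finally show ?case by (simp add: psi_single)
  qed (simp_all add: psi_add bm_add2 mult.commute distrib_left)
qed (simp_all add: psi_add bm_add1 distrib_right)

lemma psi_one: "psi q 1 = bcp_one"
proof -
  have "psi q 1 = psi q (Poly_Mapping.single 0 1)" by simp
  also have "\<dots> = bm (bsc 1) (psiw q 0)" by (rule psi_single)
  also have "\<dots> = bcp_one" by (simp add: zero_list_def psiw_def bsc_1 bm_one_left)
  finally show ?thesis .
qed

lemma psi_sc: "psi q (sc c) = bsc c"
  by (simp add: psi_single zero_list_def psiw_def bm_one_right)

lemma psi_smul: "psi q (smul c x) = bm (bsc c) (psi q x)"
  by (simp add: smul_def psi_mult psi_sc)

lemma psi_fgen: "psi q (fgen g) = psig q g"
  by (simp add: fgen_def psi_single psiw_def bm_one_right bsc_1 bm_one_left)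

lemma psi_A: "psi q A = Poly_Mapping.single (Z0, 1, 0) 1" by (simp add: gA_def psi_fgen psig_def)
lemma psi_B: "psi q B = Poly_Mapping.single (Z1, 0, 1) 1" by (simp add: gB_def psi_fgen psig_def)
lemma psi_C: "psi q C = Poly_Mapping.single (Z1, 1, 0) 1" by (simp add: gC_def psi_fgen psig_def)
lemma psi_D: "psi q D = Poly_Mapping.single (Z0, 0, 1) 1" by (simp add: gD_def psi_fgen psig_def)
lemma psi_I: "psi q I = Poly_Mapping.single (Z0, -1, -1) 1 + Poly_Mapping.single (Z1, -1, -1) (-1)"
  by (simp add: gDi_def psi_fgen psig_def)

lemmas psi_simps = psi_mult psi_diff psi_smul psi_A psi_B psi_C psi_D psi_I psi_one
  bm_add1 bm_add2 bm_single bsc_single bsig_def pex_def bm_uminus1 bm_uminus2 bm_diff1 bm_diff2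

lemma psi_Dq: "psi q Dq = Poly_Mapping.single (Z0, 1, 1) 1 - Poly_Mapping.single (Z1, 1, 1) 1"
  using qnz by (simp add: Dq_def psi_simps)

lemma psi_r1: "psi q (A * B - smul (inverse q) (B * A)) = 0"
  using qnz by (simp add: psi_simps)
lemma psi_r2: "psi q (C * D - smul (inverse q) (D * C)) = 0"
  using qnz by (simp add: psi_simps)
lemma psi_r3: "psi q (A * C - smul q (C * A)) = 0"
  using qnz by (simp add: psi_simps)
lemma psi_r4: "psi q (B * D - smul q (D * B)) = 0"
  using qnz by (simp add: psi_simps)
lemma psi_r5: "psi q (A * D - D * A) = 0"
  using qnz by (simp add: psi_simps)
lemma psi_r6: "psi q (B * C - smul (q^2) (C * B)) = 0"
  using qnz by (simp add: psi_simps power2_eq_square mult.assoc)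
lemma psi_r7: "psi q (Dq * I - 1) = 0"
  using qnz by (simp add: psi_Dq psi_simps bcp_one_def single_uminus[symmetric])
lemma psi_r8: "psi q (I * Dq - 1) = 0"
  using qnz by (simp add: psi_Dq psi_simps bcp_one_def single_uminus[symmetric])
lemma psi_r9: "psi q (A * B) = 0" by (simp add: psi_simps)
lemma psi_r10: "psi q (A * C) = 0" by (simp add: psi_simps)
lemma psi_r11: "psi q (C * D) = 0" by (simp add: psi_simps)
lemma psi_r12: "psi q (B * D) = 0" by (simp add: psi_simps)

lemma psi_rels: "r \<in> rels_DT q \<Longrightarrow> psi q r = 0"
  unfolding rels_ring Dq_def[symmetric]
  using psi_r1 psi_r2 psi_r3 psi_r4 psi_r5 psi_r6 psi_r7 psi_r8 psi_r9 psi_r10 psi_r11 psi_r12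
  by blast

lemma psi_J: "x \<in> J \<Longrightarrow> psi q x = 0"
  unfolding ideal_DT_def
proof (induction rule: gen_ideal.induct)
  case (gen r) then show ?case by (rule psi_rels)
next
  case zero then show ?case by simp
next
  case (add a b) then show ?case by (simp add: psi_add)
next
  case (lmul a x) then show ?case by (simp add: fmul_eq psi_mult)
next
  case (rmul a x) then show ?case by (simp add: fmul_eq psi_mult)
qed

end



definition cf :: "complex \<Rightarrow> int \<Rightarrow> int \<Rightarrow> complex" where
  "cf q k l = q powi pex k l * (- q) powi (- (1 + max (- k) 0 + max (- l) 0))"

definition fb :: "complex \<Rightarrow> z2 \<times> int \<times> int \<Rightarrow> fa" where
  "fb q e = (case e of (Z0, k, l) \<Rightarrow> W0 k l | (Z1, k, l) \<Rightarrow> smul (cf q k l) (W1 k l))"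

lemma fb_Z0[simp]: "fb q (Z0, k, l) = W0 k l" by (simp add: fb_def)
lemma fb_Z1[simp]: "fb q (Z1, k, l) = smul (cf q k l) (W1 k l)" by (simp add: fb_def)

lemma lin_ext_Lx: "lin_ext f x = Lx (\<lambda>a c. smul c (f a)) x"
  by (simp add: lin_ext_def Lx_def fmul_eq fscal_eq smul_def)

lemma Phi_add: fixes f :: "z2 \<times> int \<times> int \<Rightarrow> fa" shows "lin_ext f (x + y) = lin_ext f x + lin_ext f y"
  unfolding lin_ext_Lx by (rule Lx_add) (simp_all add: smul_add_left)
lemma Phi_single: fixes f :: "z2 \<times> int \<times> int \<Rightarrow> fa" shows "lin_ext f (Poly_Mapping.single a c) = smul c (f a)"
  unfolding lin_ext_Lx by (rule Lx_single) simp
lemma Phi_zero[simp]: "lin_ext f 0 = 0" by (simp add: lin_ext_def)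

lemma Phi_bsc: fixes f :: "z2 \<times> int \<times> int \<Rightarrow> fa" shows "lin_ext f (bcp_mul q (bsc c) x) = smul c (lin_ext f x)"
proof (induction x rule: pm_induct)
  case (single a d)
  obtain j m n where a: "a = (j, m, n)" by (cases a) auto
  show ?case by (simp add: a bsc_single Phi_single mult.commute)
qed (simp_all add: bm_add2 Phi_add smul_add)

context qc
begin

abbreviation Phi where "Phi \<equiv> lin_ext (fb q)"

definition qs :: "int \<Rightarrow> int \<Rightarrow> complex" where "qs a b = q powi a * (- q) powi b"

lemma qs_mult: "qs a b * qs c d = qs (a + c) (b + d)"
  using qnz by (simp add: qs_def power_int_add mult_ac)

lemma qs_cong: "a = c \<Longrightarrow> b = d \<Longrightarrow> qs a b = qs c d" by simp

lemma cf_qs: "cf q k l = qs (pex k l) (- (1 + max (- k) 0 + max (- l) 0))"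
  by (simp add: cf_def qs_def)

lemma bsig_qs: "bsig q Z1 k l m n = qs (2 * l * m + pex k l + pex m n - pex (k + m) (l + n)) 0"
  by (simp add: bsig_def qs_def)

lemma if_qs: "(if P then - q else 1) = qs 0 (if P then 1 else 0)" by (simp add: qs_def)
lemma q2_qs: "(q ^ 2) powi k = qs (2 * k) 0"
proof -
  have "(q ^ 2) powi k = (q powi 2) powi k" by simp
  also have "\<dots> = q powi (2 * k)" by (rule power_int_mult[symmetric])
  finally show ?thesis by (simp add: qs_def)
qed

lemma pex_0l[simp]: "pex 0 l = 0" by (simp add: pex_def)
lemma pex_k0[simp]: "pex k 0 = 0" by (simp add: pex_def)
lemma pex_m1[simp]: "pex (-1) (-1) = 1" by (simp add: pex_def)

lemma inv_mq_qs: "inverse (- q) = qs 0 (-1)" by (simp add: qs_def power_int_minus)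
lemma inv_q2_qs: "(inverse (q ^ 2)) powi k = qs (- 2 * k) 0"
proof -
  have "(inverse (q ^ 2)) powi k = (q ^ 2) powi (- k)" by (simp add: power_int_minus power_int_inverse)
  also have "\<dots> = qs (2 * (- k)) 0" by (rule q2_qs)
  finally show ?thesis by simp
qed
lemma m1_qs: "(-1 :: complex) = qs (-1) 1" using qnz by (simp add: qs_def power_int_minus)

lemma sc_B: "cf q k l * ((q^2) powi k * (if l < 0 then - q else 1)) = bsig q Z1 0 1 k l * cf q k (1 + l)"
  by (simp only: cf_qs bsig_qs if_qs q2_qs qs_mult) (rule qs_cong; simp add: max_def)

lemma sc_C: "cf q k l * (if k < 0 then - q else 1) = bsig q Z1 1 0 k l * cf q (1 + k) l"
  by (simp only: cf_qs bsig_qs if_qs q2_qs qs_mult) (rule qs_cong; simp add: max_def)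

lemma sc_I: "cf q k l * (inverse (- q) * (inverse (q^2)) powi k * (if 0 < k then - q else 1) * (if 0 < l then - q else 1))
   = - (1 * bsig q Z1 (-1) (-1) k l) * cf q (-1 + k) (-1 + l)"
proof -
  have "- (1 * bsig q Z1 (-1) (-1) k l) = (-1) * bsig q Z1 (-1) (-1) k l" by simp
  then show ?thesis
    by (simp only: cf_qs bsig_qs if_qs q2_qs inv_mq_qs inv_q2_qs m1_qs qs_mult)
       (rule qs_cong; simp add: max_def)
qed

lemma PA: "A * fb q (i, k, l) \<approx> Phi (bm (psi q A) (Poly_Mapping.single (i, k, l) 1))"
proof (cases i)
  case Z0 then show ?thesis using KA0[of k l] by (simp add: psi_A bm_single bsig_def Phi_single add.commute)
next
  case Z1
  have "A * smul (cf q k l) (W1 k l) \<approx> smul (cf q k l) 0" unfolding smul_right by (rule eqv_sc[OF KA1])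
  then show ?thesis using Z1 by (simp add: psi_A bm_single)
qed

lemma PD: "D * fb q (i, k, l) \<approx> Phi (bm (psi q D) (Poly_Mapping.single (i, k, l) 1))"
proof (cases i)
  case Z0 then show ?thesis using KD0[of k l] by (simp add: psi_D bm_single bsig_def Phi_single add.commute)
next
  case Z1
  have "D * smul (cf q k l) (W1 k l) \<approx> smul (cf q k l) 0" unfolding smul_right by (rule eqv_sc[OF KD1])
  then show ?thesis using Z1 by (simp add: psi_D bm_single)
qed

lemma PB: "B * fb q (i, k, l) \<approx> Phi (bm (psi q B) (Poly_Mapping.single (i, k, l) 1))"
proof (cases i)
  case Z0 then show ?thesis using KB0[of k l] by (simp add: psi_B bm_single)
next
  case Z1
  have "B * smul (cf q k l) (W1 k l) \<approx> smul (cf q k l) (smul ((q^2) powi k * (if l < 0 then - q else 1)) (W1 k (l + 1)))"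
    unfolding smul_right by (rule eqv_sc[OF KB1])
  also have "\<dots> = smul (bsig q Z1 0 1 k l * cf q k (1 + l)) (W1 k (1 + l))"
    by (simp only: smul_smul sc_B[symmetric]) (simp add: add.commute)
  finally show ?thesis using Z1 by (simp add: psi_B bm_single Phi_single)
qed

lemma PC: "C * fb q (i, k, l) \<approx> Phi (bm (psi q C) (Poly_Mapping.single (i, k, l) 1))"
proof (cases i)
  case Z0 then show ?thesis using KC0[of k l] by (simp add: psi_C bm_single)
next
  case Z1
  have "C * smul (cf q k l) (W1 k l) \<approx> smul (cf q k l) (smul (if k < 0 then - q else 1) (W1 (k + 1) l))"
    unfolding smul_right by (rule eqv_sc[OF KC1])
  also have "\<dots> = smul (bsig q Z1 1 0 k l * cf q (1 + k) l) (W1 (1 + k) l)"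
    by (simp only: smul_smul sc_C[symmetric]) (simp add: add.commute)
  finally show ?thesis using Z1 by (simp add: psi_C bm_single Phi_single)
qed

lemma PI: "I * fb q (i, k, l) \<approx> Phi (bm (psi q I) (Poly_Mapping.single (i, k, l) 1))"
proof (cases i)
  case Z0 then show ?thesis using KI0[of k l] by (simp add: psi_I bm_single bm_add1 bsig_def Phi_single)
next
  case Z1
  have "I * smul (cf q k l) (W1 k l) \<approx> smul (cf q k l) (smul (inverse (- q) * (inverse (q^2)) powi k * (if 0 < k then - q else 1)
   * (if 0 < l then - q else 1)) (W1 (k - 1) (l - 1)))"
    unfolding smul_right by (rule eqv_sc[OF KI1])
  also have "\<dots> = smul (- (1 * bsig q Z1 (-1) (-1) k l) * cf q (-1 + k) (-1 + l)) (W1 (-1 + k) (-1 + l))"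
    by (simp only: smul_smul sc_I[symmetric]) simp
  finally show ?thesis using Z1 by (simp add: psi_I bm_single bm_add1 Phi_single)
qed

end



context qc
begin

lemma single_bsc: "Poly_Mapping.single (j, m, n) c = bm (bsc c) (Poly_Mapping.single (j, m, n) 1)"
  by (simp add: bsc_single)

lemma P_letter: "fgen g * fb q (i, k, l) \<approx> Phi (bm (psig q g) (Poly_Mapping.single (i, k, l) 1))"
  by (cases g) (simp_all add: psi_fgen[symmetric] gA_def[symmetric] gB_def[symmetric]
     gC_def[symmetric] gD_def[symmetric] gDi_def[symmetric] PA PB PC PD PI)

lemma KL_letter: "fgen g * Phi x \<approx> Phi (bm (psig q g) x)"
proof (induction x rule: pm_induct)
  case zero then show ?case by simp
next
  case (add x y) then show ?case by (simp add: Phi_add bm_add2 distrib_left eqv_add)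
next
  case (single a c)
  obtain i k l where a: "a = (i, k, l)" by (cases a) auto
  have "fgen g * Phi (Poly_Mapping.single a c) = smul c (fgen g * fb q (i, k, l))"
    by (simp add: a Phi_single)
  also have "\<dots> \<approx> smul c (Phi (bm (psig q g) (Poly_Mapping.single (i, k, l) 1)))"
    by (intro eqv_sc P_letter)
  also have "\<dots> = Phi (bm (bsc c) (bm (psig q g) (Poly_Mapping.single (i, k, l) 1)))"
    by (simp add: Phi_bsc)
  also have "bm (bsc c) (bm (psig q g) (Poly_Mapping.single (i, k, l) 1))
      = bm (psig q g) (bm (bsc c) (Poly_Mapping.single (i, k, l) 1))"
    by (rule bsc_pull[symmetric])
  also have "bm (bsc c) (Poly_Mapping.single (i, k, l) 1) = Poly_Mapping.single a c"
    by (simp add: a bsc_single)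
  finally show ?case .
qed

lemma KL_word: "Poly_Mapping.single w 1 * Phi x \<approx> Phi (bm (psiw q w) x)"
proof (induction w arbitrary: x)
  case Nil
  have h: "Poly_Mapping.single [] (1::complex) = 1" by (simp add: zero_list_def[symmetric])
  show ?case unfolding h by (simp add: psiw_def bm_one_left)
next
  case (Cons g w)
  have "Poly_Mapping.single (g # w) 1 * Phi x = fgen g * (Poly_Mapping.single w 1 * Phi x)"
    by (simp add: fgen_mult_single[symmetric] mult.assoc)
  also have "\<dots> \<approx> fgen g * Phi (bm (psiw q w) x)" by (intro eqv_lmul Cons)
  also have "\<dots> \<approx> Phi (bm (psig q g) (bm (psiw q w) x))" by (rule KL_letter)
  also have "\<dots> = Phi (bm (psiw q (g # w)) x)" by (simp add: psiw_def bm_assoc')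
  finally show ?case .
qed

lemma KL_all: "p * Phi x \<approx> Phi (bm (psi q p) x)"
proof (induction p rule: pm_induct)
  case zero then show ?case by simp
next
  case (add y z) then show ?case by (simp add: Phi_add bm_add1 psi_add distrib_right eqv_add)
next
  case (single w c)
  have "Poly_Mapping.single w c * Phi x = smul c (Poly_Mapping.single w 1 * Phi x)"
    by (subst single_smul) simp
  also have "\<dots> \<approx> smul c (Phi (bm (psiw q w) x))" by (intro eqv_sc KL_word)
  also have "\<dots> = Phi (bm (psi q (Poly_Mapping.single w c)) x)"
    by (simp add: Phi_bsc psi_single bm_assoc')
  finally show ?case .
qed

lemma psi_Zf: "psi q Zf = Poly_Mapping.single (Z0, 0, 0) 1"
  by (simp add: Zf_def psi_simps)
lemma psi_Ef: "psi q Ef = Poly_Mapping.single (Z1, 0, 0) (- q)"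
  by (simp add: Ef_def psi_simps)
lemma psi_Ai: "psi q Ai = Poly_Mapping.single (Z0, -1, 0) 1"
  by (simp add: Ai_def psi_simps)
lemma psi_Dv: "psi q Dv = Poly_Mapping.single (Z0, 0, -1) 1"
  by (simp add: Dv_def psi_simps)
lemma psi_Ci: "psi q Ci = Poly_Mapping.single (Z1, -1, 0) (- q)"
  by (simp add: Ci_def psi_simps)
lemma psi_Bi: "psi q Bi = Poly_Mapping.single (Z1, 0, -1) (- q)"
  by (simp add: Bi_def psi_simps)

lemma pow_h:
  assumes "psi q x = Poly_Mapping.single (i, a, 0) s"
  shows "bm (Poly_Mapping.single (i, 0, 0) 1) (psi q (x ^ n)) = Poly_Mapping.single (i, int n * a, 0) (s ^ n)"
proof (induction n)
  case 0 then show ?case by (simp add: psi_one bm_one_right)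
next
  case (Suc n)
  have e1: "bm (Poly_Mapping.single (i, 0, 0) 1) (Poly_Mapping.single (i, a, 0) s) = Poly_Mapping.single (i, a, 0) s"
    by (simp add: bm_single bsig_def)
  have e2: "bm (Poly_Mapping.single (i, a, 0) s) (Poly_Mapping.single (i, 0, 0) 1) = Poly_Mapping.single (i, a, 0) s"
    by (simp add: bm_single bsig_def)
  have "bm (Poly_Mapping.single (i, 0, 0) 1) (psi q (x ^ Suc n))
      = bm (bm (Poly_Mapping.single (i, 0, 0) 1) (Poly_Mapping.single (i, a, 0) s)) (psi q (x ^ n))"
    by (simp add: psi_mult assms bm_assoc')
  also have "\<dots> = bm (Poly_Mapping.single (i, a, 0) s) (psi q (x ^ n))" by (simp only: e1)
  also have "\<dots> = bm (bm (Poly_Mapping.single (i, a, 0) s) (Poly_Mapping.single (i, 0, 0) 1)) (psi q (x ^ n))"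
    by (simp only: e2)
  also have "\<dots> = bm (Poly_Mapping.single (i, a, 0) s) (bm (Poly_Mapping.single (i, 0, 0) 1) (psi q (x ^ n)))"
    by (simp only: bm_assoc')
  also have "\<dots> = Poly_Mapping.single (i, int (Suc n) * a, 0) (s ^ Suc n)"
    by (simp add: Suc bm_single bsig_def algebra_simps)
  finally show ?case .
qed

lemma pow_v:
  assumes "psi q x = Poly_Mapping.single (i, 0, b) s"
  shows "bm (Poly_Mapping.single (i, 0, 0) 1) (psi q (x ^ n)) = Poly_Mapping.single (i, 0, int n * b) (s ^ n)"
proof (induction n)
  case 0 then show ?case by (simp add: psi_one bm_one_right)
next
  case (Suc n)
  have e1: "bm (Poly_Mapping.single (i, 0, 0) 1) (Poly_Mapping.single (i, 0, b) s) = Poly_Mapping.single (i, 0, b) s"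
    by (simp add: bm_single bsig_def)
  have e2: "bm (Poly_Mapping.single (i, 0, b) s) (Poly_Mapping.single (i, 0, 0) 1) = Poly_Mapping.single (i, 0, b) s"
    by (simp add: bm_single bsig_def)
  have "bm (Poly_Mapping.single (i, 0, 0) 1) (psi q (x ^ Suc n))
      = bm (bm (Poly_Mapping.single (i, 0, 0) 1) (Poly_Mapping.single (i, 0, b) s)) (psi q (x ^ n))"
    by (simp add: psi_mult assms bm_assoc')
  also have "\<dots> = bm (Poly_Mapping.single (i, 0, b) s) (psi q (x ^ n))" by (simp only: e1)
  also have "\<dots> = bm (bm (Poly_Mapping.single (i, 0, b) s) (Poly_Mapping.single (i, 0, 0) 1)) (psi q (x ^ n))"
    by (simp only: e2)
  also have "\<dots> = bm (Poly_Mapping.single (i, 0, b) s) (bm (Poly_Mapping.single (i, 0, 0) 1) (psi q (x ^ n)))"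
    by (simp only: bm_assoc')
  also have "\<dots> = Poly_Mapping.single (i, 0, int (Suc n) * b) (s ^ Suc n)"
    by (simp add: Suc bm_single bsig_def algebra_simps)
  finally show ?case .
qed

lemma pw_h:
  assumes "psi q x = Poly_Mapping.single (i, 1, 0) s" "psi q xi = Poly_Mapping.single (i, -1, 0) s'"
  shows "bm (Poly_Mapping.single (i, 0, 0) 1) (psi q (pw x xi k)) =
     Poly_Mapping.single (i, k, 0) (if 0 \<le> k then s ^ nat k else s' ^ nat (- k))"
  using pow_h[OF assms(1), of "nat k"] pow_h[OF assms(2), of "nat (- k)"]
  by (simp add: pw_def)

lemma pw_v:
  assumes "psi q x = Poly_Mapping.single (i, 0, 1) s" "psi q xi = Poly_Mapping.single (i, 0, -1) s'"
  shows "bm (Poly_Mapping.single (i, 0, 0) 1) (psi q (pw x xi k)) =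
     Poly_Mapping.single (i, 0, k) (if 0 \<le> k then s ^ nat k else s' ^ nat (- k))"
  using pow_v[OF assms(1), of "nat k"] pow_v[OF assms(2), of "nat (- k)"]
  by (simp add: pw_def)

end



context qc
begin

lemma alpha_qs: "(if 0 \<le> k then 1 else (- q) ^ nat (- k)) = qs 0 (max (- k) 0)"
  by (simp add: qs_def power_int_def max_def)

lemma psi_W0: "psi q (W0 k l) = Poly_Mapping.single (Z0, k, l) 1"
proof -
  have hX: "bm (Poly_Mapping.single (Z0, 0, 0) 1) (psi q (pw A Ai k)) = Poly_Mapping.single (Z0, k, 0) 1"
    using pw_h[of A Z0 1 Ai 1 k] by (simp add: psi_A psi_Ai)
  have hY: "bm (Poly_Mapping.single (Z0, 0, 0) 1) (psi q (pw D Dv l)) = Poly_Mapping.single (Z0, 0, l) 1"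
    using pw_v[of D Z0 1 Dv 1 l] by (simp add: psi_D psi_Dv)
  have e: "Poly_Mapping.single (Z0, k, 0) 1 = bm (Poly_Mapping.single (Z0, k, 0) 1) (Poly_Mapping.single (Z0, 0, 0) (1::complex))"
    by (simp add: bm_single bsig_def)
  have "psi q (W0 k l) = bm (bm (Poly_Mapping.single (Z0, 0, 0) 1) (psi q (pw A Ai k))) (psi q (pw D Dv l))"
    by (simp add: W0_def psi_mult psi_Zf bm_assoc')
  also have "\<dots> = bm (Poly_Mapping.single (Z0, k, 0) 1) (psi q (pw D Dv l))" by (simp only: hX)
  also have "\<dots> = bm (bm (Poly_Mapping.single (Z0, k, 0) 1) (Poly_Mapping.single (Z0, 0, 0) 1)) (psi q (pw D Dv l))"
    by (simp only: e[symmetric])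
  also have "\<dots> = Poly_Mapping.single (Z0, k, l) 1" by (simp only: bm_assoc' hY) (simp add: bm_single bsig_def)
  finally show ?thesis .
qed

lemma psi_W1: "psi q (W1 k l) = Poly_Mapping.single (Z1, k, l) (qs (- pex k l) (1 + max (- k) 0 + max (- l) 0))"
proof -
  define \<alpha> where "\<alpha> = (if 0 \<le> k then 1 else (- q) ^ nat (- k))"
  define \<beta> where "\<beta> = (if 0 \<le> l then 1 else (- q) ^ nat (- l))"
  have hX: "bm (Poly_Mapping.single (Z1, 0, 0) 1) (psi q (pw C Ci k)) = Poly_Mapping.single (Z1, k, 0) \<alpha>"
    using pw_h[of C Z1 1 Ci "- q" k] by (simp add: psi_C psi_Ci \<alpha>_def)
  have hY: "bm (Poly_Mapping.single (Z1, 0, 0) 1) (psi q (pw B Bi l)) = Poly_Mapping.single (Z1, 0, l) \<beta>"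
    using pw_v[of B Z1 1 Bi "- q" l] by (simp add: psi_B psi_Bi \<beta>_def)
  have e0: "Poly_Mapping.single (Z1, 0, 0) (- q) = bm (bsc (- q)) (Poly_Mapping.single (Z1, 0, 0) (1::complex))"
    by (simp add: bsc_single)
  have e: "Poly_Mapping.single (Z1, k, 0) \<alpha> = bm (Poly_Mapping.single (Z1, k, 0) \<alpha>) (Poly_Mapping.single (Z1, 0, 0) (1::complex))"
    by (simp add: bm_single bsig_def)
  have "psi q (W1 k l) = bm (bsc (- q)) (bm (bm (Poly_Mapping.single (Z1, 0, 0) 1) (psi q (pw C Ci k))) (psi q (pw B Bi l)))"
    by (simp only: W1_def psi_mult psi_Ef e0 bm_assoc')
  also have "\<dots> = bm (bsc (- q)) (bm (Poly_Mapping.single (Z1, k, 0) \<alpha>) (psi q (pw B Bi l)))" by (simp only: hX)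
  also have "\<dots> = bm (bsc (- q)) (bm (bm (Poly_Mapping.single (Z1, k, 0) \<alpha>) (Poly_Mapping.single (Z1, 0, 0) 1)) (psi q (pw B Bi l)))"
    by (simp only: e[symmetric])
  also have "\<dots> = bm (bsc (- q)) (Poly_Mapping.single (Z1, k, l) (\<alpha> * \<beta> * bsig q Z1 k 0 0 l))"
    by (simp only: bm_assoc' hY) (simp add: bm_single)
  also have "\<dots> = Poly_Mapping.single (Z1, k, l) (- q * (\<alpha> * \<beta> * bsig q Z1 k 0 0 l))"
    by (simp add: bsc_single)
  also have "- q * (\<alpha> * \<beta> * bsig q Z1 k 0 0 l) = qs (- pex k l) (1 + max (- k) 0 + max (- l) 0)"
  proof -
    have mq: "- q = qs 0 1" by (simp add: qs_def)
    show ?thesis unfolding \<alpha>_def \<beta>_def alpha_qs bsig_qs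
      unfolding mq qs_mult by (rule qs_cong; simp)
  qed
  finally show ?thesis .
qed

lemma psi_fb: "psi q (fb q e) = Poly_Mapping.single e 1"
proof -
  obtain i k l where e: "e = (i, k, l)" by (cases e) auto
  show ?thesis
  proof (cases i)
    case Z0 then show ?thesis by (simp add: e psi_W0)
  next
    case Z1
    have "psi q (fb q e) = bm (bsc (cf q k l)) (Poly_Mapping.single (Z1, k, l) (qs (- pex k l) (1 + max (- k) 0 + max (- l) 0)))"
      by (simp add: e Z1 psi_smul psi_W1)
    also have "\<dots> = Poly_Mapping.single (Z1, k, l) (cf q k l * qs (- pex k l) (1 + max (- k) 0 + max (- l) 0))"
      by (simp add: bsc_single)
    also have "cf q k l * qs (- pex k l) (1 + max (- k) 0 + max (- l) 0) = qs 0 0"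
      by (simp only: cf_qs qs_mult) (rule qs_cong; simp)
    finally show ?thesis by (simp add: e Z1 qs_def)
  qed
qed

lemma psi_Phi: "psi q (Phi x) = x"
proof (induction x rule: pm_induct)
  case (single a c)
  obtain i k l where a: "a = (i, k, l)" by (cases a) auto
  show ?case by (simp add: a Phi_single psi_smul psi_fb bsc_single)
qed (simp_all add: Phi_add psi_add)

lemma Phi_one: "Phi bcp_one \<approx> 1"
proof -
  have "Phi bcp_one = W0 0 0 + smul (cf q 0 0) (W1 0 0)"
    by (simp add: bcp_one_def Phi_add Phi_single)
  also have "\<dots> = Zf - smul (inverse q) Ef"
  proof -
    have "cf q 0 0 = - inverse q" by (simp add: cf_def power_int_minus)
    then show ?thesis by (simp add: W0_def W1_def smul_uminus_left)
  qed
  also have "\<dots> \<approx> 1" by (rule ZmE)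
  finally show ?thesis .
qed

lemma cond_surj: "p - Phi (psi q p) \<in> J"
proof -
  have "p * Phi bcp_one \<approx> Phi (bm (psi q p) bcp_one)" by (rule KL_all)
  then have "p * Phi bcp_one \<approx> Phi (psi q p)" by (simp add: bm_one_right)
  moreover have "p * Phi bcp_one \<approx> p * 1" by (intro eqv_lmul Phi_one)
  ultimately have "p * 1 \<approx> Phi (psi q p)" by (meson eqv_sym eqv_trans)
  then have "p \<approx> Phi (psi q p)" by simp
  then show ?thesis by (simp add: eqv_def)
qed

lemma cond_inj: "Phi x \<in> J \<Longrightarrow> x = 0"
  using psi_J[of "Phi x"] psi_Phi[of x] by simp

lemma cond_mult: "Phi (bm x y) - Phi x * Phi y \<in> J"
proof -
  have "Phi x * Phi y \<approx> Phi (bm (psi q (Phi x)) y)" by (rule KL_all)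
  then have "Phi x * Phi y \<approx> Phi (bm x y)" by (simp add: psi_Phi)
  then show ?thesis unfolding eqv_def using J_uminus by fastforce
qed

lemma cond_one: "Phi bcp_one - fscal 1 \<in> J"
  using Phi_one by (simp add: eqv_def fscal_eq)

end



lemma bcp_counit_Lx: "bcp_counit x = Lx (\<lambda>a c. case a of (i, h) \<Rightarrow> c * zdelta i Z0 * 1) x"
  by (simp add: bcp_counit_def Lx_def)

lemma bcp_counit_add: "bcp_counit (x + y) = bcp_counit x + bcp_counit y"
  unfolding bcp_counit_Lx by (rule Lx_add) (auto simp: distrib_right split: prod.split)

lemma bcp_counit_single: "bcp_counit (Poly_Mapping.single (i, h) c) = c * zdelta i Z0"
  unfolding bcp_counit_Lx by (subst Lx_single) (auto split: prod.split)

lemma fcounit_smul: "fcounit eg (smul c x) = c * fcounit eg x"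
  by (simp add: smul_def fcounit_mult fcounit_scal)

abbreviation eps where "eps \<equiv> fcounit eps_gen"

lemma eps_A: "eps gA = 1" by (simp add: gA_def fcounit_fgen)
lemma eps_B: "eps gB = 0" by (simp add: gB_def fcounit_fgen)
lemma eps_C: "eps gC = 0" by (simp add: gC_def fcounit_fgen)
lemma eps_D: "eps gD = 1" by (simp add: gD_def fcounit_fgen)
lemma eps_I: "eps gDi = 1" by (simp add: gDi_def fcounit_fgen)

lemma eps_pw: "eps x = 1 \<Longrightarrow> eps xi = 1 \<Longrightarrow> eps (pw x xi k) = 1"
  by (simp add: pw_def fcounit_power)

lemma eps_W0: "eps (W0 k l) = 1"
proof -
  have "eps (pw gA Ai k) = 1" by (rule eps_pw) (simp_all add: Ai_def fcounit_mult eps_A eps_D eps_I)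
  moreover have "eps (pw gD Dv l) = 1" by (rule eps_pw) (simp_all add: Dv_def fcounit_mult eps_A eps_D eps_I)
  ultimately show ?thesis by (simp add: W0_def Zf_def fcounit_mult eps_A eps_D eps_I)
qed

lemma eps_W1: "eps (W1 k l) = 0"
  by (simp add: W1_def Ef_def fcounit_mult eps_B)

lemma cond_counit: "eps (lin_ext (fb q) x) = bcp_counit x"
proof (induction x rule: pm_induct)
  case zero then show ?case by (simp add: bcp_counit_def)
next
  case (add x y) then show ?case by (simp add: Phi_add fcounit_add bcp_counit_add)
next
  case (single a c)
  obtain i k l where a: "a = (i, k, l)" by (cases a) auto
  show ?case by (cases i) (simp_all add: a Phi_single fcounit_smul eps_W0 eps_W1 bcp_counit_single zdelta_def)
qed



type_synonym fa2 = "gen free_alg2"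

abbreviation sc2 :: "complex \<Rightarrow> fa2" where "sc2 c \<equiv> Poly_Mapping.single 0 c"

context qc
begin

abbreviation T where "T \<equiv> tens_ker J"

definition eqT :: "fa2 \<Rightarrow> fa2 \<Rightarrow> bool" (infix "\<simeq>" 50) where
  "x \<simeq> y \<longleftrightarrow> x - y \<in> T"

lemma T_zero: "0 \<in> T" by (rule tens_ker.zero)
lemma T_add: "x \<in> T \<Longrightarrow> y \<in> T \<Longrightarrow> x + y \<in> T" by (rule tens_ker.add)
lemma T_ft1: "p \<in> J \<Longrightarrow> ftensor p w \<in> T" by (rule tens_ker.left)
lemma T_ft2: "p \<in> J \<Longrightarrow> ftensor w p \<in> T" by (rule tens_ker.right)

lemma single_pair_ft: "Poly_Mapping.single (u, v) c = ftensor (Poly_Mapping.single u c) (Poly_Mapping.single v 1)"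
  by (simp add: ftensor_single)

lemma T_lmul: "t \<in> T \<Longrightarrow> X * t \<in> T"
proof (induction rule: tens_ker.induct)
  case zero then show ?case by (simp add: T_zero)
next
  case (add a b) then show ?case by (simp add: distrib_left T_add)
next
  case (left p w)
  show ?case
  proof (induction X rule: pm_induct)
    case zero then show ?case by (simp add: T_zero)
  next
    case (add x y) then show ?case by (simp add: distrib_right T_add)
  next
    case (single a c)
    obtain u v where a: "a = (u, v)" by (cases a) auto
    show ?case unfolding a single_pair_ft ftensor_mult
      by (rule T_ft1) (rule J_lmul[OF left])
  qed
next
  case (right p w)
  show ?case
  proof (induction X rule: pm_induct)
    case zero then show ?case by (simp add: T_zero)
  next
    case (add x y) then show ?case by (simp add: distrib_right T_add)
  next
    case (single a c)
    obtain u v where a: "a = (u, v)" by (cases a) auto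
    show ?case unfolding a single_pair_ft ftensor_mult
      by (rule T_ft2) (rule J_lmul[OF right])
  qed
qed

lemma T_rmul: "t \<in> T \<Longrightarrow> t * X \<in> T"
proof (induction rule: tens_ker.induct)
  case zero then show ?case by (simp add: T_zero)
next
  case (add a b) then show ?case by (simp add: distrib_right T_add)
next
  case (left p w)
  show ?case
  proof (induction X rule: pm_induct)
    case zero then show ?case by (simp add: T_zero)
  next
    case (add x y) then show ?case by (simp add: distrib_left T_add)
  next
    case (single a c)
    obtain u v where a: "a = (u, v)" by (cases a) auto
    show ?case unfolding a single_pair_ft ftensor_mult
      by (rule T_ft1) (rule J_rmul[OF left])
  qed
next
  case (right p w)
  show ?case
  proof (induction X rule: pm_induct)
    case zero then show ?case by (simp add: T_zero)
  next
    case (add x y) then show ?case by (simp add: distrib_left T_add)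
  next
    case (single a c)
    obtain u v where a: "a = (u, v)" by (cases a) auto
    show ?case unfolding a single_pair_ft ftensor_mult
      by (rule T_ft2) (rule J_rmul[OF right])
  qed
qed

lemma T_uminus: "t \<in> T \<Longrightarrow> - t \<in> T"
  using T_lmul[of t "-1"] by simp
lemma T_diff: "x \<in> T \<Longrightarrow> y \<in> T \<Longrightarrow> x - y \<in> T"
  using T_add[of x "- y"] T_uminus[of y] by simp

lemma eqT_refl[simp, intro]: "x \<simeq> x" by (simp add: eqT_def T_zero)
lemma eqT_sym: "x \<simeq> y \<Longrightarrow> y \<simeq> x"
proof -
  assume "x \<simeq> y"
  then have "- (x - y) \<in> T" unfolding eqT_def by (rule T_uminus)
  then show ?thesis unfolding eqT_def by simp
qed
lemma eqT_trans[trans]: "x \<simeq> y \<Longrightarrow> y \<simeq> z \<Longrightarrow> x \<simeq> z"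
proof -
  assume "x \<simeq> y" "y \<simeq> z"
  then have "(x - y) + (y - z) \<in> T" unfolding eqT_def by (rule T_add)
  then show ?thesis unfolding eqT_def by simp
qed
lemma eqT_add: "x \<simeq> x' \<Longrightarrow> y \<simeq> y' \<Longrightarrow> x + y \<simeq> x' + y'"
proof -
  assume "x \<simeq> x'" "y \<simeq> y'"
  then have "(x - x') + (y - y') \<in> T" unfolding eqT_def by (rule T_add)
  moreover have "(x - x') + (y - y') = (x + y) - (x' + y')" by (simp add: algebra_simps)
  ultimately show ?thesis unfolding eqT_def by simp
qed
lemma eqT_lmul: "x \<simeq> x' \<Longrightarrow> y * x \<simeq> y * x'"
proof -
  assume "x \<simeq> x'"
  then have "y * (x - x') \<in> T" unfolding eqT_def by (rule T_lmul)
  then show ?thesis unfolding eqT_def by (simp add: right_diff_distrib)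
qed
lemma eqT_rmul: "x \<simeq> x' \<Longrightarrow> x * y \<simeq> x' * y"
proof -
  assume "x \<simeq> x'"
  then have "(x - x') * y \<in> T" unfolding eqT_def by (rule T_rmul)
  then show ?thesis unfolding eqT_def by (simp add: left_diff_distrib)
qed
lemma eqT_mult: "x \<simeq> x' \<Longrightarrow> y \<simeq> y' \<Longrightarrow> x * y \<simeq> x' * y'"
  using eqT_lmul eqT_rmul eqT_trans by blast

lemma eqT_ft: "x \<approx> x' \<Longrightarrow> y \<approx> y' \<Longrightarrow> ftensor x y \<simeq> ftensor x' y'"
proof -
  assume h: "x \<approx> x'" "y \<approx> y'"
  have "ftensor x y - ftensor x' y' = ftensor (x - x') y + ftensor x' (y - y')"
    by (simp add: ftensor_diff1 ftensor_diff2)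
  moreover have "ftensor (x - x') y + ftensor x' (y - y') \<in> T"
    using h unfolding eqv_def by (intro T_add T_ft1 T_ft2)
  ultimately show ?thesis unfolding eqT_def by simp
qed

lemma eqT_ft0: "x \<approx> 0 \<Longrightarrow> ftensor x y \<simeq> 0"
  using eqT_ft[of x 0 y y] by simp
lemma eqT_ft0': "y \<approx> 0 \<Longrightarrow> ftensor x y \<simeq> 0"
  using eqT_ft[of x x y 0] by simp

section \<open>Sector decomposition of tensors\<close>

definition Zh :: fa where "Zh = 1 - Zf"

definition sec :: "z2 \<Rightarrow> fa" where "sec s = (if s = Z0 then Zf else Zh)"

lemma sec_Z0[simp]: "sec Z0 = Zf" and sec_Z1[simp]: "sec Z1 = Zh" by (simp_all add: sec_def)

lemma Zh_central: "qcm Zh p 1"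
proof -
  have "Zh * p = p - Zf * p" by (simp add: Zh_def algebra_simps)
  also have "\<dots> \<approx> p - p * Zf" by (intro eqv_diff eqv_refl) (use qcm_use3[OF Z_central, of p] in simp)
  also have "\<dots> = p * Zh" by (simp add: Zh_def algebra_simps)
  finally show ?thesis by (simp add: qcm_def)
qed

lemma sec_central: "sec s * p \<approx> p * sec s"
  using Z_central[of p] Zh_central[of p] by (cases s) (simp_all add: qcm_def)

lemma sec_idem: "sec s * sec t \<approx> (if s = t then sec s else 0)"
proof -
  have ZZh: "Zf * Zh \<approx> 0"
  proof -
    have "Zf * Zh = Zf - Zf * Zf" by (simp add: Zh_def algebra_simps)
    also have "\<dots> \<approx> Zf - Zf" by (intro eqv_diff eqv_refl ZZ)
    finally show ?thesis by simp
  qed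
  have ZhZ: "Zh * Zf \<approx> 0"
  proof -
    have "Zh * Zf = Zf - Zf * Zf" by (simp add: Zh_def algebra_simps)
    also have "\<dots> \<approx> Zf - Zf" by (intro eqv_diff eqv_refl ZZ)
    finally show ?thesis by simp
  qed
  have ZhZh: "Zh * Zh \<approx> Zh"
  proof -
    have "Zh * Zh = Zh - Zf * Zh" by (simp add: Zh_def algebra_simps)
    also have "\<dots> \<approx> Zh - 0" by (intro eqv_diff eqv_refl ZZh)
    finally show ?thesis by simp
  qed
  show ?thesis by (cases s; cases t) (simp_all add: ZZ ZZh ZhZ ZhZh)
qed

lemma sec_prod: "(sec s * a) * (sec t * b) \<approx> (if s = t then sec s * (a * b) else 0)"
proof -
  have "(sec s * a) * (sec t * b) = sec s * ((a * sec t) * b)" by (simp add: mult.assoc)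
  also have "\<dots> \<approx> sec s * ((sec t * a) * b)" by (intro eqv_lmul eqv_rmul eqv_sym[OF sec_central])
  also have "\<dots> = (sec s * sec t) * (a * b)" by (simp add: mult.assoc)
  also have "\<dots> \<approx> (if s = t then sec s else 0) * (a * b)" by (intro eqv_rmul sec_idem)
  finally show ?thesis by (cases "s = t") simp_all
qed

definition T4 :: "(z2 \<Rightarrow> z2 \<Rightarrow> fa \<times> fa) \<Rightarrow> fa2" where
  "T4 F = (\<Sum>s\<in>{Z0, Z1}. \<Sum>t\<in>{Z0, Z1}. ftensor (sec s * fst (F s t)) (sec t * snd (F s t)))"

lemma T4_expand: "T4 F = ftensor (Zf * fst (F Z0 Z0)) (Zf * snd (F Z0 Z0)) + ftensor (Zf * fst (F Z0 Z1)) (Zh * snd (F Z0 Z1))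
   + (ftensor (Zh * fst (F Z1 Z0)) (Zf * snd (F Z1 Z0)) + ftensor (Zh * fst (F Z1 Z1)) (Zh * snd (F Z1 Z1)))"
  by (simp add: T4_def)

lemma ft_sec_prod: "ftensor (sec s * a) (sec t * b) * ftensor (sec s' * a') (sec t' * b') \<simeq>
   (if s = s' \<and> t = t' then ftensor (sec s * (a * a')) (sec t * (b * b')) else 0)"
proof -
  have "ftensor (sec s * a) (sec t * b) * ftensor (sec s' * a') (sec t' * b')
     = ftensor ((sec s * a) * (sec s' * a')) ((sec t * b) * (sec t' * b'))" by (rule ftensor_mult)
  also have "\<dots> \<simeq> ftensor (if s = s' then sec s * (a * a') else 0) (if t = t' then sec t * (b * b') else 0)"
    by (intro eqT_ft sec_prod)
  finally show ?thesis by (auto split: if_split_asm)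
qed

definition cmul :: "(z2 \<Rightarrow> z2 \<Rightarrow> fa \<times> fa) \<Rightarrow> (z2 \<Rightarrow> z2 \<Rightarrow> fa \<times> fa) \<Rightarrow> z2 \<Rightarrow> z2 \<Rightarrow> fa \<times> fa" where
  "cmul F G s t = (fst (F s t) * fst (G s t), snd (F s t) * snd (G s t))"

lemma eqT_sum: "(\<And>x. x \<in> S \<Longrightarrow> f x \<simeq> g x) \<Longrightarrow> sum f S \<simeq> sum g S"
proof (induction S rule: infinite_finite_induct)
  case (insert x F) then show ?case by (simp add: eqT_add)
qed simp_all

lemma eqT_sum4:
  "a1 \<simeq> b1 \<Longrightarrow> a2 \<simeq> b2 \<Longrightarrow> a3 \<simeq> b3 \<Longrightarrow> a4 \<simeq> b4 \<Longrightarrow> a1 + a2 + (a3 + a4) \<simeq> b1 + b2 + (b3 + b4)"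
  by (intro eqT_add)

lemma collapse4: "(\<Sum>s'\<in>{Z0, Z1}. \<Sum>t'\<in>{Z0, Z1}. if s = s' \<and> t = t' then K s' t' else (0::fa2)) = K s t"
  by (cases s; cases t) simp_all

lemma T4_mult: "T4 F * T4 G \<simeq> T4 (cmul F G)"
proof -
  define f where "f = (\<lambda>s t. ftensor (sec s * fst (F s t)) (sec t * snd (F s t)))"
  define g where "g = (\<lambda>s t. ftensor (sec s * fst (G s t)) (sec t * snd (G s t)))"
  define K where "K = (\<lambda>s t s' t'. ftensor (sec s * (fst (F s t) * fst (G s' t'))) (sec t * (snd (F s t) * snd (G s' t'))))"
  have 1: "T4 F * T4 G = (\<Sum>s\<in>{Z0, Z1}. \<Sum>t\<in>{Z0, Z1}. \<Sum>s'\<in>{Z0, Z1}. \<Sum>t'\<in>{Z0, Z1}. f s t * g s' t')"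
    unfolding T4_def f_def g_def
    by (subst sum_distrib_right, subst sum_distrib_right, subst sum_distrib_left, subst sum_distrib_left, rule refl)
  have h: "\<And>s t s' t'. f s t * g s' t' \<simeq> (if s = s' \<and> t = t' then K s t s' t' else 0)"
    unfolding f_def g_def K_def by (rule ft_sec_prod)
  have 2: "(\<Sum>s\<in>{Z0, Z1}. \<Sum>t\<in>{Z0, Z1}. \<Sum>s'\<in>{Z0, Z1}. \<Sum>t'\<in>{Z0, Z1}. f s t * g s' t')
     \<simeq> (\<Sum>s\<in>{Z0, Z1}. \<Sum>t\<in>{Z0, Z1}. \<Sum>s'\<in>{Z0, Z1}. \<Sum>t'\<in>{Z0, Z1}. (if s = s' \<and> t = t' then K s t s' t' else 0))"
    by (rule eqT_sum, rule eqT_sum, rule eqT_sum, rule eqT_sum, rule h)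
  have 3: "(\<Sum>s\<in>{Z0, Z1}. \<Sum>t\<in>{Z0, Z1}. \<Sum>s'\<in>{Z0, Z1}. \<Sum>t'\<in>{Z0, Z1}. (if s = s' \<and> t = t' then K s t s' t' else 0))
     = T4 (cmul F G)"
    unfolding collapse4 T4_def cmul_def K_def by simp
  show ?thesis using 2 unfolding 1 3 .
qed

end



definition comp :: "fa \<times> fa \<Rightarrow> fa \<times> fa \<Rightarrow> fa \<times> fa \<Rightarrow> fa \<times> fa \<Rightarrow> z2 \<Rightarrow> z2 \<Rightarrow> fa \<times> fa" where
  "comp a00 a01 a10 a11 = (\<lambda>s t. if s = Z0 then (if t = Z0 then a00 else a01) else (if t = Z0 then a10 else a11))"

lemma comp_simps[simp]: "comp a00 a01 a10 a11 Z0 Z0 = a00" "comp a00 a01 a10 a11 Z0 Z1 = a01"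
  "comp a00 a01 a10 a11 Z1 Z0 = a10" "comp a00 a01 a10 a11 Z1 Z1 = a11"
  by (simp_all add: comp_def)

definition cpow :: "(z2 \<Rightarrow> z2 \<Rightarrow> fa \<times> fa) \<Rightarrow> nat \<Rightarrow> z2 \<Rightarrow> z2 \<Rightarrow> fa \<times> fa" where
  "cpow F n s t = (fst (F s t) ^ n, snd (F s t) ^ n)"

definition cpw :: "(z2 \<Rightarrow> z2 \<Rightarrow> fa \<times> fa) \<Rightarrow> (z2 \<Rightarrow> z2 \<Rightarrow> fa \<times> fa) \<Rightarrow> int \<Rightarrow> z2 \<Rightarrow> z2 \<Rightarrow> fa \<times> fa" where
  "cpw F G k s t = (pw (fst (F s t)) (fst (G s t)) k, pw (snd (F s t)) (snd (G s t)) k)"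

context qc
begin

definition DT :: "fa \<Rightarrow> (z2 \<Rightarrow> z2 \<Rightarrow> fa \<times> fa) \<Rightarrow> bool" where
  "DT x F \<longleftrightarrow> fdelta delta_gen x \<simeq> T4 F"

lemma DT_mult: "DT x F \<Longrightarrow> DT y G \<Longrightarrow> DT (x * y) (cmul F G)"
  unfolding DT_def by (simp add: fdelta_mult) (meson eqT_mult eqT_trans T4_mult)

lemma T4_const: "T4 (\<lambda>s t. (a, b)) = ftensor a b"
proof -
  have "T4 (\<lambda>s t. (a, b)) = ftensor (Zf * a + Zh * a) (Zf * b + Zh * b)"
    by (simp add: T4_def ftensor_add1 ftensor_add2 algebra_simps)
  also have "Zf * a + Zh * a = a" by (simp add: Zh_def algebra_simps)
  also have "Zf * b + Zh * b = b" by (simp add: Zh_def algebra_simps)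
  finally show ?thesis .
qed

lemma DT_one: "DT 1 (\<lambda>s t. (1, 1))"
  unfolding DT_def T4_const by (simp add: fdelta_one ftensor_one)

lemma DT_pow: "DT x F \<Longrightarrow> DT (x ^ n) (cpow F n)"
proof (induction n)
  case 0 then show ?case using DT_one by (simp add: cpow_def)
next
  case (Suc n)
  then have "DT (x * x ^ n) (cmul F (cpow F n))" by (intro DT_mult)
  moreover have "cmul F (cpow F n) = cpow F (Suc n)" by (simp add: cmul_def cpow_def fun_eq_iff)
  ultimately show ?case by simp
qed

lemma DT_pw: "DT x F \<Longrightarrow> DT xi G \<Longrightarrow> DT (pw x xi k) (cpw F G k)"
proof -
  assume h: "DT x F" "DT xi G"
  show ?thesis
  proof (cases "0 \<le> k")
    case True
    have "cpw F G k = cpow F (nat k)" using True by (simp add: cpw_def cpow_def pw_def fun_eq_iff)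
    then show ?thesis using DT_pow[OF h(1), of "nat k"] True by (simp add: pw_def)
  next
    case False
    have "cpw F G k = cpow G (nat (- k))" using False by (simp add: cpw_def cpow_def pw_def fun_eq_iff)
    then show ?thesis using DT_pow[OF h(2), of "nat (- k)"] False by (simp add: pw_def)
  qed
qed

lemma ortho_from: "qcm x y 1 \<Longrightarrow> y * x \<approx> 0 \<Longrightarrow> x * y \<approx> 0"
  unfolding qcm_def by (metis eqv_sc eqv_trans smul_1)

lemma ZfA: "Zf * A \<approx> A" by (rule S0_absorb, rule ortho_from[OF qcm_EA AE])
lemma ZfD: "Zf * D \<approx> D" by (rule S0_absorb, rule ortho_from[OF qcm_ED DE])
lemma ZfB: "Zf * B \<approx> 0" by (rule ortho_from[OF qcm_ZB BZ])
lemma ZfC: "Zf * C \<approx> 0" by (rule ortho_from[OF qcm_ZC CZ])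
lemma Zh_S1: "Zf * x \<approx> 0 \<Longrightarrow> Zh * x \<approx> x"
proof -
  assume "Zf * x \<approx> 0"
  then have "x - Zf * x \<approx> x - 0" by (intro eqv_diff eqv_refl)
  then show ?thesis by (simp add: Zh_def algebra_simps)
qed
lemma ZhB: "Zh * B \<approx> B" by (rule Zh_S1[OF ZfB])
lemma ZhC: "Zh * C \<approx> C" by (rule Zh_S1[OF ZfC])

lemma ZfA': "A \<approx> Zf * A" by (rule eqv_sym[OF ZfA])
lemma ZfD': "D \<approx> Zf * D" by (rule eqv_sym[OF ZfD])
lemma ZhB': "B \<approx> Zh * B" by (rule eqv_sym[OF ZhB])
lemma ZhC': "C \<approx> Zh * C" by (rule eqv_sym[OF ZhC])

lemma fd_A: "fdelta delta_gen gA = delta_gen Ga" by (simp only: gA_def fdelta_fgen)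
lemma fd_B: "fdelta delta_gen gB = delta_gen Gb" by (simp only: gB_def fdelta_fgen)
lemma fd_C: "fdelta delta_gen gC = delta_gen Gc" by (simp only: gC_def fdelta_fgen)
lemma fd_D: "fdelta delta_gen gD = delta_gen Gd" by (simp only: gD_def fdelta_fgen)
lemma fd_I: "fdelta delta_gen gDi = delta_gen GDi" by (simp only: gDi_def fdelta_fgen)

lemma DT_A: "DT A (comp (A, A) (0, 0) (0, 0) (B, C))"
proof -
  have "ftensor A A + ftensor B C \<simeq> ftensor (Zf * A) (Zf * A) + ftensor (Zh * B) (Zh * C)"
    by (intro eqT_add eqT_ft ZfA' ZhB' ZhC')
  then show ?thesis unfolding DT_def T4_expand by (simp add: fd_A)
qed

lemma DT_D: "DT D (comp (D, D) (0, 0) (0, 0) (C, B))"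
proof -
  have "ftensor C B + ftensor D D \<simeq> ftensor (Zf * D) (Zf * D) + ftensor (Zh * C) (Zh * B)"
    by (subst add.commute) (intro eqT_add eqT_ft ZfD' ZhB' ZhC')
  then show ?thesis unfolding DT_def T4_expand by (simp add: fd_D)
qed

lemma DT_B: "DT B (comp (0, 0) (A, B) (B, D) (0, 0))"
proof -
  have "ftensor A B + ftensor B D \<simeq> ftensor (Zf * A) (Zh * B) + ftensor (Zh * B) (Zf * D)"
    by (intro eqT_add eqT_ft ZfA' ZfD' ZhB' ZhC')
  then show ?thesis unfolding DT_def T4_expand by (simp add: fd_B)
qed

lemma DT_C: "DT C (comp (0, 0) (D, C) (C, A) (0, 0))"
proof -
  have "ftensor C A + ftensor D C \<simeq> ftensor (Zf * D) (Zh * C) + ftensor (Zh * C) (Zf * A)"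
    by (subst add.commute) (intro eqT_add eqT_ft ZfA' ZfD' ZhB' ZhC')
  then show ?thesis unfolding DT_def T4_expand by (simp add: fd_C)
qed

lemma DT_I: "DT I (\<lambda>s t. (I, I))"
  unfolding DT_def T4_const by (simp add: fd_I)

end



abbreviation "FA \<equiv> comp (gA, gA) (0, 0) (0, 0) (gB, gC)"
abbreviation "FD \<equiv> comp (gD, gD) (0, 0) (0, 0) (gC, gB)"
abbreviation "FB \<equiv> comp (0, 0) (gA, gB) (gB, gD) (0, 0)"
abbreviation "FC \<equiv> comp (0, 0) (gD, gC) (gC, gA) (0, 0)"
abbreviation "FI \<equiv> (\<lambda>s t. (gDi, gDi))"

context qc
begin

lemma DT_W0: "DT (W0 k l) (cmul (cmul FI (cmul FA FD)) (cmul (cpw FA (cmul FI FD) k) (cpw FD (cmul FI FA) l)))"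
  unfolding W0_def Zf_def Ai_def Dv_def
  by (intro DT_mult DT_pw DT_A DT_D DT_I)

lemma DT_W1: "DT (W1 k l) (cmul (cmul FI (cmul FB FC)) (cmul (cpw FC (cmul FI FB) k) (cpw FB (cmul FC FI) l)))"
  unfolding W1_def Ef_def Ci_def Bi_def
  by (intro DT_mult DT_pw DT_B DT_C DT_I)

lemma fdelta_W0: "fdelta delta_gen (W0 k l) \<simeq>
   ftensor (Zf * (I * (A * D) * (pw A (I * D) k * pw D (I * A) l))) (Zf * (I * (A * D) * (pw A (I * D) k * pw D (I * A) l)))
 + ftensor (Zh * (I * (B * C) * (pw B (I * C) k * pw C (I * B) l))) (Zh * (I * (C * B) * (pw C (I * B) k * pw B (I * C) l)))"
  using DT_W0[of k l] unfolding DT_def T4_expand by (simp add: cmul_def cpw_def)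

lemma fdelta_W1: "fdelta delta_gen (W1 k l) \<simeq>
   ftensor (Zf * (I * (A * D) * (pw D (I * A) k * pw A (D * I) l))) (Zh * (I * (B * C) * (pw C (I * B) k * pw B (C * I) l)))
 + ftensor (Zh * (I * (B * C) * (pw C (I * B) k * pw B (C * I) l))) (Zf * (I * (D * A) * (pw A (I * D) k * pw D (A * I) l)))"
  using DT_W1[of k l] unfolding DT_def T4_expand by (simp add: cmul_def cpw_def)

end



lemma bcp_delta_Lx: "bcp_delta x = Lx (\<lambda>a c. case a of (i, h) \<Rightarrow>
     (\<Sum>i1\<in>{Z0, Z1}. \<Sum>i2\<in>{Z0, Z1}. \<Sum>e\<in>{Z0, Z1}. \<Sum>e'\<in>{Z0, Z1}.
        if z2_add i1 i2 = i then
          Poly_Mapping.single ((i1, lam e h), (e', h)) (c * (zdelta i2 e' * zdelta e e'))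
        else 0)) x"
  by (simp add: bcp_delta_def Lx_def)

lemma bcp_delta_add: "bcp_delta (x + y) = bcp_delta x + bcp_delta y"
  unfolding bcp_delta_Lx
  by (rule Lx_add) (auto simp: distrib_right single_add sum.distrib split: prod.split)

lemma bcp_delta_single0: "bcp_delta (Poly_Mapping.single (Z0, k, l) c) =
   Poly_Mapping.single ((Z0, k, l), (Z0, k, l)) c + Poly_Mapping.single ((Z1, l, k), (Z1, k, l)) c"
  unfolding bcp_delta_Lx by (subst Lx_single) (auto simp: zdelta_def)

lemma bcp_delta_single1: "bcp_delta (Poly_Mapping.single (Z1, k, l) c) =
   Poly_Mapping.single ((Z0, l, k), (Z1, k, l)) c + Poly_Mapping.single ((Z1, k, l), (Z0, k, l)) c"
  unfolding bcp_delta_Lx by (subst Lx_single) (auto simp: zdelta_def)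

lemma lin_ext2_Lx: fixes f :: "z2 \<times> int \<times> int \<Rightarrow> fa" shows "lin_ext2 f t = Lx (\<lambda>a c. sc2 c * ftensor (f (fst a)) (f (snd a))) t"
  by (simp add: lin_ext2_def Lx_def fmul2_eq zero_prod_def zero_list_def)

lemma lin_ext2_add: fixes f :: "z2 \<times> int \<times> int \<Rightarrow> fa" shows "lin_ext2 f (x + y) = lin_ext2 f x + lin_ext2 f y"
  unfolding lin_ext2_Lx by (rule Lx_add) (simp_all add: single_add distrib_right)

lemma lin_ext2_single: fixes f :: "z2 \<times> int \<times> int \<Rightarrow> fa" shows "lin_ext2 f (Poly_Mapping.single a c) = sc2 c * ftensor (f (fst a)) (f (snd a))"
  unfolding lin_ext2_Lx by (rule Lx_single) simp

lemma ftensor_smul: "ftensor (smul a x) (smul b y) = sc2 (a * b) * ftensor x y"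
  by (simp add: smul_def ftensor_scal1 ftensor_scal2 mult.assoc[symmetric] single0_mult mult.commute)

context qc
begin

lemma Zh_Ef: "Zh * (Ef * r) \<approx> Ef * r"
proof -
  have "Zh * Ef \<approx> Ef" by (rule Zh_S1[OF ZE])
  then have "(Zh * Ef) * r \<approx> Ef * r" by (rule eqv_rmul)
  then show ?thesis by (simp add: mult.assoc)
qed

lemma Zf_Zf: "Zf * (Zf * r) \<approx> Zf * r"
proof -
  have "(Zf * Zf) * r \<approx> Zf * r" by (intro eqv_rmul ZZ)
  then show ?thesis by (simp add: mult.assoc)
qed

lemma ZW0: "Zf * W0 k l \<approx> W0 k l" unfolding W0_def by (rule Zf_Zf)
lemma ZhW1: "Zh * W1 k l \<approx> W1 k l" unfolding W1_def by (rule Zh_Ef)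

definition mu :: "int \<Rightarrow> complex" where "mu k = (if k < 0 then (inverse (q^2)) ^ nat (- k) else 1)"

lemma ICBi: "I * C \<approx> smul (inverse (q^2)) Bi"
  unfolding Bi_def by (rule qcm_use3[OF qIC])

lemma pwB': "pw B (I * C) k \<approx> smul (mu k) (pw B Bi k)"
  unfolding mu_def by (rule pw_scale[OF ICBi])

lemma qcm_Bi_X1': "qcm Bi (pw C Ci l) (inverse ((q^2) powi l))"
  using qcm_Bi_X1[of l] by (simp add: power_int_inverse)

lemma qcm_XB_XC: "qcm (pw B Bi k) (pw C Ci l) (((q^2) powi l) powi k)"
  by (rule qcm_pw_left[OF qcm_B_X1 qcm_Bi_X1']) (simp add: qnz)

lemma L_eq: "Zh * (I * (B * C) * (pw B (I * C) k * pw C (I * B) l)) \<approx> smul (mu k * ((q^2) powi l) powi k) (W1 l k)"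
proof -
  have "Zh * (I * (B * C) * (pw B (I * C) k * pw C (I * B) l)) = Zh * (Ef * (pw B (I * C) k * pw C Ci l))"
    by (simp add: Ef_def Ci_def mult.assoc)
  also have "\<dots> \<approx> Ef * (pw B (I * C) k * pw C Ci l)" by (rule Zh_Ef)
  also have "\<dots> \<approx> Ef * (smul (mu k) (pw B Bi k) * pw C Ci l)" by (intro eqv_lmul eqv_rmul pwB')
  also have "\<dots> = smul (mu k) (Ef * (pw B Bi k * pw C Ci l))" by simp
  also have "\<dots> \<approx> smul (mu k) (Ef * smul (((q^2) powi l) powi k) (pw C Ci l * pw B Bi k))"
    by (intro eqv_sc eqv_lmul qcm_use3 qcm_XB_XC)
  also have "\<dots> = smul (mu k * ((q^2) powi l) powi k) (W1 l k)" by (simp add: W1_def)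
  finally show ?thesis .
qed

lemma ICB: "I * (C * B) \<approx> smul (inverse (q^2)) Ef"
proof -
  have "I * (C * B) \<approx> I * smul (inverse (q^2)) (B * C)" by (intro eqv_lmul qcm_use3 qCB)
  then show ?thesis by (simp add: Ef_def)
qed

lemma R_eq: "Zh * (I * (C * B) * (pw C (I * B) k * pw B (I * C) l)) \<approx> smul (inverse (q^2) * mu l) (W1 k l)"
proof -
  have "Zh * (I * (C * B) * (pw C (I * B) k * pw B (I * C) l)) = Zh * (I * (C * B) * (pw C Ci k * pw B (I * C) l))"
    by (simp add: Ci_def)
  also have "\<dots> \<approx> Zh * (smul (inverse (q^2)) Ef * (pw C Ci k * smul (mu l) (pw B Bi l)))"
    by (intro eqv_lmul eqv_mult ICB pwB' eqv_refl)
  also have "\<dots> = smul (inverse (q^2) * mu l) (Zh * (Ef * (pw C Ci k * pw B Bi l)))" by (simp add: mult.assoc mult.commute)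
  also have "\<dots> \<approx> smul (inverse (q^2) * mu l) (Ef * (pw C Ci k * pw B Bi l))" by (intro eqv_sc Zh_Ef)
  finally show ?thesis by (simp add: W1_def)
qed

lemma pex_sym: "pex k l + pex l k = 2 * k * l"
  by (simp add: pex_def)

lemma mu_qs: "mu k = qs (- 2 * max (- k) 0) 0"
proof (cases "k < 0")
  case True
  have "(inverse (q^2)) ^ nat (- k) = (inverse (q^2)) powi (- k)" using True by (simp add: power_int_def)
  also have "\<dots> = qs (- 2 * (- k)) 0" by (rule inv_q2_qs)
  finally show ?thesis using True by (simp add: mu_def)
next
  case False then show ?thesis by (simp add: mu_def qs_def)
qed

lemma qs_even: "qs a (2 * b) = qs (a + 2 * b) 0"
  using qnz by (simp add: qs_def power_int_mult power_int_add)

lemma scal_Z0: "mu k * ((q^2) powi l) powi k * (inverse (q^2) * mu l) = cf q l k * cf q k l"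
proof -
  have a: "((q^2) powi l) powi k = qs (2 * l * k) 0"
    by (simp add: q2_qs[of l, unfolded qs_def] qs_def power_int_mult[symmetric] mult.assoc)
  have b: "inverse (q^2) = qs (-2) 0" using qnz by (simp add: qs_def power_int_minus)
  have "mu k * ((q^2) powi l) powi k * (inverse (q^2) * mu l)
      = qs (- 2 * max (- k) 0 + 2 * l * k + (-2 + - 2 * max (- l) 0)) (0 + 0 + (0 + 0))"
    by (simp only: mu_qs a b qs_mult)
  also have "\<dots> = qs (pex l k + pex k l + 2 * (- (1 + max (- k) 0 + max (- l) 0))) 0"
    using pex_sym[of l k] by (intro qs_cong) (simp_all add: algebra_simps)
  also have "\<dots> = qs (pex l k + pex k l) (2 * (- (1 + max (- k) 0 + max (- l) 0)))"
    by (rule qs_even[symmetric])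
  also have "\<dots> = cf q l k * cf q k l"
    by (simp only: cf_qs qs_mult) (rule qs_cong; simp)
  finally show ?thesis .
qed

end



context qc
begin

lemma R6: "Zf * (I * (D * A) * (pw A (I * D) k * pw D (A * I) l)) \<approx> W0 k l"
proof -
  have h1: "I * (D * A) \<approx> Zf" using eqv_lmul[OF qcm_use3[OF qDA], of I] by (simp add: Zf_def)
  have h2: "pw D (A * I) l \<approx> pw D Dv l"
    using pw_scale[OF qcm_use3[OF qAI], of D l] by (simp add: Dv_def cong: if_cong)
  have "Zf * (I * (D * A) * (pw A (I * D) k * pw D (A * I) l)) \<approx> Zf * (Zf * (pw A Ai k * pw D Dv l))"
    unfolding Ai_def by (intro eqv_lmul eqv_mult h1 h2 eqv_refl)
  also have "\<dots> \<approx> Zf * (pw A Ai k * pw D Dv l)" by (rule Zf_Zf)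
  finally show ?thesis by (simp add: W0_def)
qed

lemma L7: "Zf * (I * (A * D) * (pw D (I * A) k * pw A (D * I) l)) \<approx> W0 l k"
proof -
  have h2: "pw A (D * I) l \<approx> pw A Ai l"
    using pw_scale[OF qcm_use3[OF qDI], of A l] by (simp add: Ai_def cong: if_cong)
  have qv: "qcm Dv (pw A Ai l) (inverse 1)" using qcm_Dv_X0[of l] by simp
  have qq: "qcm (pw D Dv k) (pw A Ai l) 1"
    using qcm_pw_left[OF qcm_D_X0[of l] qv, of k] by simp
  have "Zf * (I * (A * D) * (pw D (I * A) k * pw A (D * I) l)) \<approx> Zf * (Zf * (pw D Dv k * pw A Ai l))"
    unfolding Dv_def Zf_def by (intro eqv_lmul eqv_mult h2 eqv_refl)
  also have "\<dots> \<approx> Zf * (pw D Dv k * pw A Ai l)" by (rule Zf_Zf)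
  also have "\<dots> \<approx> Zf * smul 1 (pw A Ai l * pw D Dv k)" by (intro eqv_lmul qcm_use3 qq)
  finally show ?thesis by (simp add: W0_def)
qed

lemma delta0: "fdelta delta_gen (W0 k l) \<simeq> ftensor (W0 k l) (W0 k l) + sc2 (cf q l k * cf q k l) * ftensor (W1 l k) (W1 k l)"
proof -
  have e: "I * (A * D) * (pw A (I * D) k * pw D (I * A) l) = W0 k l"
    by (simp add: W0_def Zf_def Ai_def Dv_def)
  have 1: "ftensor (Zf * (I * (A * D) * (pw A (I * D) k * pw D (I * A) l))) (Zf * (I * (A * D) * (pw A (I * D) k * pw D (I * A) l)))
      \<simeq> ftensor (W0 k l) (W0 k l)"
    unfolding e by (intro eqT_ft ZW0)
  have 2: "ftensor (Zh * (I * (B * C) * (pw B (I * C) k * pw C (I * B) l))) (Zh * (I * (C * B) * (pw C (I * B) k * pw B (I * C) l)))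
      \<simeq> ftensor (smul (mu k * ((q^2) powi l) powi k) (W1 l k)) (smul (inverse (q^2) * mu l) (W1 k l))"
    by (intro eqT_ft L_eq R_eq)
  have 3: "ftensor (smul (mu k * ((q^2) powi l) powi k) (W1 l k)) (smul (inverse (q^2) * mu l) (W1 k l))
      = sc2 (cf q l k * cf q k l) * ftensor (W1 l k) (W1 k l)"
    by (simp only: ftensor_smul scal_Z0[symmetric] mult.assoc)
  show ?thesis using eqT_trans[OF fdelta_W0 eqT_add[OF 1 2]] unfolding 3 .
qed

lemma delta1: "fdelta delta_gen (W1 k l) \<simeq> ftensor (W0 l k) (W1 k l) + ftensor (W1 k l) (W0 k l)"
proof -
  have e: "I * (B * C) * (pw C (I * B) k * pw B (C * I) l) = W1 k l"
    by (simp add: W1_def Ef_def Ci_def Bi_def)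
  have 1: "ftensor (Zf * (I * (A * D) * (pw D (I * A) k * pw A (D * I) l))) (Zh * (I * (B * C) * (pw C (I * B) k * pw B (C * I) l)))
     \<simeq> ftensor (W0 l k) (W1 k l)"
    unfolding e by (intro eqT_ft L7 ZhW1)
  have 2: "ftensor (Zh * (I * (B * C) * (pw C (I * B) k * pw B (C * I) l))) (Zf * (I * (D * A) * (pw A (I * D) k * pw D (A * I) l)))
     \<simeq> ftensor (W1 k l) (W0 k l)"
    unfolding e by (intro eqT_ft R6 ZhW1)
  show ?thesis using eqT_trans[OF fdelta_W1 eqT_add[OF 1 2]] .
qed

lemma eqT_sc2: "x \<simeq> y \<Longrightarrow> sc2 c * x \<simeq> sc2 c * y" by (rule eqT_lmul)

lemma fdelta_smul: "fdelta delta_gen (smul c x) = sc2 c * fdelta delta_gen x"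
  by (simp add: smul_def fdelta_scal)

lemma cond_delta: "fdelta delta_gen (Phi x) - lin_ext2 (fb q) (bcp_delta x) \<in> T"
proof -
  have "fdelta delta_gen (Phi x) \<simeq> lin_ext2 (fb q) (bcp_delta x)"
  proof (induction x rule: pm_induct)
    case zero then show ?case by (simp add: bcp_delta_def lin_ext2_def)
  next
    case (add x y) then show ?case by (simp add: Phi_add fdelta_add bcp_delta_add lin_ext2_add eqT_add)
  next
    case (single a c)
    obtain i k l where a: "a = (i, k, l)" by (cases a) auto
    show ?case
    proof (cases i)
      case Z0
      have "fdelta delta_gen (Phi (Poly_Mapping.single a c)) = sc2 c * fdelta delta_gen (W0 k l)"
        by (simp add: a Z0 Phi_single fdelta_smul)
      also have "\<dots> \<simeq> sc2 c * (ftensor (W0 k l) (W0 k l) + sc2 (cf q l k * cf q k l) * ftensor (W1 l k) (W1 k l))"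
        by (intro eqT_sc2 delta0)
      also have "\<dots> = lin_ext2 (fb q) (bcp_delta (Poly_Mapping.single a c))"
        by (simp add: a Z0 bcp_delta_single0 lin_ext2_add lin_ext2_single ftensor_smul distrib_left)
      finally show ?thesis .
    next
      case Z1
      have "fdelta delta_gen (Phi (Poly_Mapping.single a c)) = sc2 (c * cf q k l) * fdelta delta_gen (W1 k l)"
        by (simp add: a Z1 Phi_single fdelta_smul)
      also have "\<dots> \<simeq> sc2 (c * cf q k l) * (ftensor (W0 l k) (W1 k l) + ftensor (W1 k l) (W0 k l))"
        by (intro eqT_sc2 delta1)
      also have "\<dots> = lin_ext2 (fb q) (bcp_delta (Poly_Mapping.single a c))"
      proof -
        have f1: "ftensor (W0 l k) (smul (cf q k l) (W1 k l)) = sc2 (cf q k l) * ftensor (W0 l k) (W1 k l)"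
          by (simp add: smul_def ftensor_scal2)
        have f2: "ftensor (smul (cf q k l) (W1 k l)) (W0 k l) = sc2 (cf q k l) * ftensor (W1 k l) (W0 k l)"
          by (simp add: smul_def ftensor_scal1)
        have f3: "\<And>X. sc2 c * (sc2 (cf q k l) * X) = sc2 (c * cf q k l) * X"
          by (simp add: mult.assoc[symmetric] single0_mult)
        show ?thesis
          by (simp add: a Z1 bcp_delta_single1 lin_ext2_add lin_ext2_single f1 f2 f3 distrib_left)
      qed
      finally show ?thesis .
    qed
  qed
  then show ?thesis by (simp add: eqT_def)
qed

lemma main: "hopf_iso_DT q (fb q)"
  unfolding hopf_iso_DT_def Let_def
  using cond_surj cond_inj cond_mult cond_one cond_delta cond_counit
  by (auto simp: fmul_eq)

end

theorem proposition2p3: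
  fixes q :: complex
  assumes "norm q = 1"
  shows "\<exists>f. hopf_iso_DT q f"
proof -
  have "q \<noteq> 0" using assms by auto
  then interpret qc q by unfold_locales
  show ?thesis using main by blast
qed



end
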